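(* Let $F$ be a non-Archimedean local field with $\mathrm{char}(F)\neq 2$ and $K$ an étale $F$-algebra of degree $2$. Let $L'_K=\mathcal{O}_K$ viewed as a lattice in the quadratic space $V'_K$. (a) $\mathrm{sn}_F(\mathrm{O}(L'_K))=\mathrm{sn}_F(\mathrm{SO}(L'_K))$, and this group equals $\mathrm{N}_{K/F}(K^\times)\bmod (F^\times)^2$ if $K$ is a field, and $\mathcal{O}_F^\times\bmod (F^\times)^2$ if $K=F\times F$. (b) If $F=\mathbb{Q}_p$ for a prime $p$, then the natural homomorphism $\mathrm{SO}(L'_K)\to \mathrm{O}(D_{L'_K})$ is surjective.
   Context: An étale $F$-algebra of degree $2$ is a quadratic field extension of $F$ or $F\times F$; $\alpha'$ denotes the conjugate of $\alpha\in K$ and $\mathrm{N}_{K/F}(\alpha)=\alpha\alpha'$. $\mathcal{O}_K$ is the ring of integers of $K$, and $\mathcal{O}_K=\mathcal{O}_F\times\mathcal{O}_F$ if $K=F\times F$. $V'_K$ is the quadratic $F$-space with underlying space $K$ and quadratic form $\mathrm{N}_{K/F}$. For a quadratic space $(V,q)$ with bilinear form $\langle v,v\rangle=2q(v)$, the spinor norm $\mathrm{sn}_F\colon\mathrm{O}(V)\to F^\times/(F^\times)^2$ is the unique homomorphism sending the reflection $\tau_a(v)=v-2\frac{\langle a,v\rangle}{\langle a,a\rangle}a$ ($q(a)\neq0$) to $q(a)$ mod squares. For an even lattice $L$ ($q(L)\subseteq\mathcal{O}_F$), $\mathrm{O}(L)$, $\mathrm{SO}(L)$ are the elements of $\mathrm{O}(V)$,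 $\mathrm{SO}(V)$ preserving $L$; the dual lattice is $L^\sharp=\{v:\langle v,L\rangle\subseteq\mathcal{O}_F\}$, the discriminant module is $D_L=L^\sharp/L$ with induced quadratic map $D_L\to F/\mathcal{O}_F$, $\mathrm{O}(D_L)$ is its group of $\mathcal{O}_F$-linear automorphisms preserving this quadratic map, and $\mathrm{O}(L)\to\mathrm{O}(D_L)$ is induced by the action on $L^\sharp$. *)

theory Defs
  imports Main "HOL-Library.Product_Plus" "HOL-Computational_Algebra.Primes"
begin

text \<open>The valuation v is only meaningful on nonzero elements.\<close>

definition discrete_valuation :: "('a::field \<Rightarrow> int) \<Rightarrow> bool" where
  "discrete_valuation v \<longleftrightarrow>
     (\<forall>x y. x \<noteq> 0 \<longrightarrow> y \<noteq> 0 \<longrightarrow> v (x * y) = v x + v y) \<and>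
     (\<forall>x y. x \<noteq> 0 \<longrightarrow> y \<noteq> 0 \<longrightarrow> x + y \<noteq> 0 \<longrightarrow> min (v x) (v y) \<le> v (x + y)) \<and>
     (\<forall>n. \<exists>x. x \<noteq> 0 \<and> v x = n)"

definition vring :: "('a::field \<Rightarrow> int) \<Rightarrow> 'a set" where
  "vring v = {x. x = 0 \<or> 0 \<le> v x}"

definition vmax :: "('a::field \<Rightarrow> int) \<Rightarrow> 'a set" where
  "vmax v = {x. x = 0 \<or> 1 \<le> v x}"

definition vunits :: "('a::field \<Rightarrow> int) \<Rightarrow> 'a set" where
  "vunits v = {x. x \<noteq> 0 \<and> v x = 0}"

definition residue_classes :: "('a::field \<Rightarrow> int) \<Rightarrow> 'a set set" where
  "residue_classes v = (\<lambda>x. {y \<in> vring v. x - y \<in> vmax v}) ` vring v"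

definition vclose :: "('a::field \<Rightarrow> int) \<Rightarrow> int \<Rightarrow> 'a \<Rightarrow> bool" where
  "vclose v k x \<longleftrightarrow> x = 0 \<or> k \<le> v x"

definition vcomplete :: "('a::field \<Rightarrow> int) \<Rightarrow> bool" where
  "vcomplete v \<longleftrightarrow>
     (\<forall>s::nat \<Rightarrow> 'a. (\<forall>k. \<exists>N. \<forall>m\<ge>N. \<forall>n\<ge>N. vclose v k (s m - s n)) \<longrightarrow>
        (\<exists>l. \<forall>k. \<exists>N. \<forall>n\<ge>N. vclose v k (s n - l)))"

definition nonarch_local_field :: "('a::field \<Rightarrow> int) \<Rightarrow> bool" where
  "nonarch_local_field v \<longleftrightarrow>
     discrete_valuation v \<and> vcomplete v \<and> finite (residue_classes v)"

section \<open>The etale algebra K = F[X]/(X^2 - d), d nonzero, on pairs (a,b) = a + b X\<close>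

definition ksc :: "'a::field \<Rightarrow> 'a \<times> 'a \<Rightarrow> 'a \<times> 'a" where
  "ksc c z = (c * fst z, c * snd z)"

definition kmul :: "'a::field \<Rightarrow> 'a \<times> 'a \<Rightarrow> 'a \<times> 'a \<Rightarrow> 'a \<times> 'a" where
  "kmul d z w = (fst z * fst w + d * snd z * snd w, fst z * snd w + snd z * fst w)"

primrec kpow :: "'a::field \<Rightarrow> 'a \<times> 'a \<Rightarrow> nat \<Rightarrow> 'a \<times> 'a" where
  "kpow d z 0 = (1, 0)"
| "kpow d z (Suc n) = kmul d z (kpow d z n)"

text \<open>Norm N(z) = z z', where (a,b)' = (a,-b).\<close>
definition knorm :: "'a::field \<Rightarrow> 'a \<times> 'a \<Rightarrow> 'a" where
  "knorm d z = fst z ^ 2 - d * snd z ^ 2"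

definition OK :: "'a::field \<Rightarrow> ('a \<Rightarrow> int) \<Rightarrow> ('a \<times> 'a) set" where
  "OK d v = {z. \<exists>n cs. (\<forall>i<n. cs i \<in> vring v) \<and>
                 kpow d z n + (\<Sum>i<n. ksc (cs i) (kpow d z i)) = 0}"

definition kbil :: "'a::field \<Rightarrow> 'a \<times> 'a \<Rightarrow> 'a \<times> 'a \<Rightarrow> 'a" where
  "kbil d x y = knorm d (x + y) - knorm d x - knorm d y"

text \<open>Reflection tau_a(x) = x - 2 <a,x>/<a,a> a, with <a,a> = 2 q(a).\<close>
definition krefl :: "'a::field \<Rightarrow> 'a \<times> 'a \<Rightarrow> 'a \<times> 'a \<Rightarrow> 'a \<times> 'a" where
  "krefl d a x = x - ksc (kbil d a x / knorm d a) a"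

definition klinear :: "('a::field \<times> 'a \<Rightarrow> 'a \<times> 'a) \<Rightarrow> bool" where
  "klinear g \<longleftrightarrow> (\<forall>x y. g (x + y) = g x + g y) \<and> (\<forall>c x. g (ksc c x) = ksc c (g x))"

definition kdet :: "('a::field \<times> 'a \<Rightarrow> 'a \<times> 'a) \<Rightarrow> 'a" where
  "kdet g = fst (g (1, 0)) * snd (g (0, 1)) - fst (g (0, 1)) * snd (g (1, 0))"

definition OV :: "'a::field \<Rightarrow> ('a \<times> 'a \<Rightarrow> 'a \<times> 'a) set" where
  "OV d = {g. klinear g \<and> bij g \<and> (\<forall>x. knorm d (g x) = knorm d x)}"

definition SOV :: "'a::field \<Rightarrow> ('a \<times> 'a \<Rightarrow> 'a \<times> 'a) set" where
  "SOV d = {g \<in> OV d. kdet g = 1}"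

definition Olat :: "'a::field \<Rightarrow> ('a \<times> 'a) set \<Rightarrow> ('a \<times> 'a \<Rightarrow> 'a \<times> 'a) set" where
  "Olat d L = {g \<in> OV d. g ` L = L}"

definition SOlat :: "'a::field \<Rightarrow> ('a \<times> 'a) set \<Rightarrow> ('a \<times> 'a \<Rightarrow> 'a \<times> 'a) set" where
  "SOlat d L = {g \<in> SOV d. g ` L = L}"

text \<open>Spinor norm image sn_F(G), as the union of square classes in F^x:
  c lies in it iff c represents sn_F(g) for some g in G, i.e. c is the product
  of q(a_i) for some factorization of g into reflections tau_{a_i}.\<close>
definition spinor_norms :: "'a::field \<Rightarrow> ('a \<times> 'a \<Rightarrow> 'a \<times> 'a) set \<Rightarrow> 'a set" where
  "spinor_norms d G = {c. \<exists>g\<in>G. \<exists>as. (\<forall>a\<in>set as. knorm d a \<noteq> 0) \<and>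
        g = foldr (\<lambda>a h. krefl d a \<circ> h) as id \<and> c = prod_list (map (knorm d) as)}"

definition dual_lattice :: "'a::field \<Rightarrow> ('a \<Rightarrow> int) \<Rightarrow> ('a \<times> 'a) set \<Rightarrow> ('a \<times> 'a) set" where
  "dual_lattice d v L = {x. \<forall>l\<in>L. kbil d x l \<in> vring v}"

text \<open>f is a lift (on representatives in the dual lattice) of an element of O(D_L):
  an O_F-linear automorphism of L^#/L preserving the quadratic map D_L \<rightarrow> F/O_F.\<close>
definition disc_isometry :: "'a::field \<Rightarrow> ('a \<Rightarrow> int) \<Rightarrow> ('a \<times> 'a) set
     \<Rightarrow> ('a \<times> 'a \<Rightarrow> 'a \<times> 'a) \<Rightarrow> bool" where
  "disc_isometry d v L f \<longleftrightarrow>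
     (\<forall>x\<in>dual_lattice d v L. f x \<in> dual_lattice d v L) \<and>
     (\<forall>x\<in>dual_lattice d v L. \<forall>y\<in>dual_lattice d v L. x - y \<in> L \<longrightarrow> f x - f y \<in> L) \<and>
     (\<forall>x\<in>dual_lattice d v L. \<forall>y\<in>dual_lattice d v L. f (x + y) - f x - f y \<in> L) \<and>
     (\<forall>c\<in>vring v. \<forall>x\<in>dual_lattice d v L. f (ksc c x) - ksc c (f x) \<in> L) \<and>
     (\<forall>y\<in>dual_lattice d v L. \<exists>x\<in>dual_lattice d v L. f x - y \<in> L) \<and>
     (\<forall>x\<in>dual_lattice d v L. \<forall>y\<in>dual_lattice d v L. f x - f y \<in> L \<longrightarrow> x - y \<in> L) \<and>
     (\<forall>x\<in>dual_lattice d v L. knorm d (f x) - knorm d x \<in> vring v)"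

end

theory Submission
  imports Defs
begin


locale dval =
  fixes v :: "'a::field \<Rightarrow> int"
  assumes dv: "discrete_valuation v"
begin

lemma vmult: "x \<noteq> 0 \<Longrightarrow> y \<noteq> 0 \<Longrightarrow> v (x * y) = v x + v y"
  using dv unfolding discrete_valuation_def by blast

lemma vultra: "x \<noteq> 0 \<Longrightarrow> y \<noteq> 0 \<Longrightarrow> x + y \<noteq> 0 \<Longrightarrow> min (v x) (v y) \<le> v (x + y)"
  using dv unfolding discrete_valuation_def by blast

lemma vsurj: "\<exists>x. x \<noteq> 0 \<and> v x = n"
  using dv unfolding discrete_valuation_def by blast

lemma v1[simp]: "v 1 = 0"
  using vmult[of 1 1] by simp

lemma vm1[simp]: "v (-1) = 0"
  using vmult[of "-1" "-1"] by simp

lemma vneg[simp]: "v (- x) = v x"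
proof (cases "x = 0")
  case False
  then show ?thesis using vmult[of "-1" x] by simp
qed simp

lemma vinv: "x \<noteq> 0 \<Longrightarrow> v (inverse x) = - v x"
  using vmult[of x "inverse x"] by simp

lemma vdiv: "x \<noteq> 0 \<Longrightarrow> y \<noteq> 0 \<Longrightarrow> v (x / y) = v x - v y"
  by (simp add: divide_inverse vmult vinv)

lemma vpow: "x \<noteq> 0 \<Longrightarrow> v (x ^ n) = int n * v x"
  by (induction n) (simp_all add: vmult algebra_simps)

lemma vsq: "x \<noteq> 0 \<Longrightarrow> v (x^2) = 2 * v x"
  using vpow[of x 2] by simp

abbreviation vc :: "int \<Rightarrow> 'a \<Rightarrow> bool" where "vc \<equiv> vclose v"

lemma vc0[simp]: "vc k 0" by (simp add: vclose_def)

lemma vc_add: "vc k x \<Longrightarrow> vc k y \<Longrightarrow> vc k (x + y)"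
  unfolding vclose_def using vultra[of x y] by fastforce

lemma vc_neg[simp]: "vc k (- x) = vc k x"
  unfolding vclose_def by simp

lemma vc_diff: "vc k x \<Longrightarrow> vc k y \<Longrightarrow> vc k (x - y)"
  using vc_add[of k x "-y"] by simp

lemma vc_mult: "vc k x \<Longrightarrow> vc m y \<Longrightarrow> vc (k + m) (x * y)"
  unfolding vclose_def by (cases "x = 0 \<or> y = 0") (auto simp: vmult)

lemma vc_mono: "vc k x \<Longrightarrow> m \<le> k \<Longrightarrow> vc m x"
  unfolding vclose_def by auto

lemma vc_sum: "(\<And>i. i \<in> A \<Longrightarrow> vc k (f i)) \<Longrightarrow> vc k (sum f A)"
  by (induction A rule: infinite_finite_induct) (auto intro: vc_add)

lemma vc_all0: "(\<And>k. vc k x) \<Longrightarrow> x = 0"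
proof -
  assume "\<And>k. vc k x"
  then have "x = 0 \<or> v x + 1 \<le> v x" unfolding vclose_def by blast
  then show "x = 0" by simp
qed

lemma vc_pow: "vc k x \<Longrightarrow> vc (int n * k) (x ^ n)"
proof (induction n)
  case 0 then show ?case by (simp add: vclose_def)
next
  case (Suc n)
  then have "vc (k + int n * k) (x * x ^ n)" using vc_mult by blast
  then show ?case by (simp add: algebra_simps)
qed

lemma vc_iff: "x \<noteq> 0 \<Longrightarrow> vc k x \<longleftrightarrow> k \<le> v x"
  by (simp add: vclose_def)

abbreviation Ov where "Ov \<equiv> vring v"

lemma vring_vc: "x \<in> vring v \<longleftrightarrow> vc 0 x"
  by (simp add: vring_def vclose_def)

lemma vmax_vc: "x \<in> vmax v \<longleftrightarrow> vc 1 x"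
  by (simp add: vmax_def vclose_def)

lemma vunits_iff: "x \<in> vunits v \<longleftrightarrow> x \<noteq> 0 \<and> v x = 0"
  by (simp add: vunits_def)

lemma O_add: "x \<in> Ov \<Longrightarrow> y \<in> Ov \<Longrightarrow> x + y \<in> Ov"
  by (simp add: vring_vc vc_add)
lemma O_neg[simp]: "- x \<in> Ov \<longleftrightarrow> x \<in> Ov"
  by (simp add: vring_vc)
lemma O_diff: "x \<in> Ov \<Longrightarrow> y \<in> Ov \<Longrightarrow> x - y \<in> Ov"
  by (simp add: vring_vc vc_diff)
lemma O_mult: "x \<in> Ov \<Longrightarrow> y \<in> Ov \<Longrightarrow> x * y \<in> Ov"
  using vc_mult[of 0 x 0 y] by (simp add: vring_vc)
lemma O_0[simp]: "0 \<in> Ov" by (simp add: vring_def)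
lemma O_1[simp]: "1 \<in> Ov" by (simp add: vring_def)
lemma O_pow: "x \<in> Ov \<Longrightarrow> x ^ n \<in> Ov"
  by (induction n) (auto intro: O_mult)
lemma O_of_nat[simp]: "of_nat n \<in> Ov"
  by (induction n) (auto intro: O_add)
lemma O_of_int[simp]: "of_int n \<in> Ov"
  by (cases n rule: int_cases) (auto simp del: of_nat_Suc)
lemma O_numeral[simp]: "numeral n \<in> Ov"
  using O_of_nat[of "numeral n"] by simp
lemma O_sum: "(\<And>i. i \<in> A \<Longrightarrow> f i \<in> Ov) \<Longrightarrow> sum f A \<in> Ov"
  by (simp add: vring_vc vc_sum)

lemma v_nonneg_of_nat: "(of_nat n :: 'a) \<noteq> 0 \<Longrightarrow> 0 \<le> v (of_nat n)"
  using O_of_nat[of n] by (simp add: vring_def)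

lemma strict_ultra: "x \<noteq> 0 \<Longrightarrow> y \<noteq> 0 \<Longrightarrow> v x < v y \<Longrightarrow> x + y \<noteq> 0 \<and> v (x + y) = v x"
proof -
  assume x: "x \<noteq> 0" and y: "y \<noteq> 0" and lt: "v x < v y"
  have ne: "x + y \<noteq> 0"
  proof
    assume "x + y = 0" then have "y = - x" by (simp add: add.commute eq_neg_iff_add_eq_0)
    then show False using lt by simp
  qed
  have "min (v x) (v y) \<le> v (x + y)" using vultra x y ne by blast
  moreover have "min (v (x + y)) (v (-y)) \<le> v (x + y + - y)"
    using vultra[of "x+y" "-y"] ne y x by simp
  ultimately show ?thesis using ne lt by auto
qed

lemma O_iff_v: "x \<noteq> 0 \<Longrightarrow> x \<in> Ov \<longleftrightarrow> 0 \<le> v x"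
  by (simp add: vring_def)

lemma O_inverse_unit: "x \<noteq> 0 \<Longrightarrow> v x = 0 \<Longrightarrow> inverse x \<in> Ov"
  by (simp add: vring_def vinv)

lemma O_div_unit: "y \<in> Ov \<Longrightarrow> x \<noteq> 0 \<Longrightarrow> v x = 0 \<Longrightarrow> y / x \<in> Ov"
  by (simp add: divide_inverse O_mult O_inverse_unit)

lemma integral_in_O:
  assumes cs: "\<forall>i<n. cs i \<in> Ov" and eq: "x ^ n + (\<Sum>i<n. cs i * x ^ i) = 0"
  shows "x \<in> Ov"
proof (rule ccontr)
  assume nx: "x \<notin> Ov"
  then have x0: "x \<noteq> 0" and vx: "v x < 0" by (auto simp: vring_def)
  have n0: "n \<noteq> 0" using eq by (cases n) auto
  have "vc ((int n - 1) * v x) (cs i * x ^ i)" if "i < n" for i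
  proof -
    have "vc (0 + int i * v x) (cs i * x ^ i)"
      using vc_mult[of 0 "cs i" "int i * v x" "x ^ i"] cs that
      by (simp add: vring_vc vclose_def vpow x0)
    then show ?thesis apply (rule vc_mono) using that vx
      by (simp add: mult_right_mono_neg)
  qed
  then have "vc ((int n - 1) * v x) (\<Sum>i<n. cs i * x ^ i)" by (intro vc_sum) auto
  then have "vc ((int n - 1) * v x) (x ^ n)"
    using eq by (metis add.inverse_unique vc_neg)
  then show False using x0 vx by (simp add: vclose_def vpow algebra_simps)
qed

end



context dval begin

lemma vc_Ov: "vc k x \<Longrightarrow> 0 \<le> k \<Longrightarrow> x \<in> Ov"
  by (simp add: vring_vc vc_mono)

lemma hensel_aux:
  assumes comp: "vcomplete v" and c: "vc 1 c"
  shows "\<exists>y. y * y - y + c = 0"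
proof -
  define y where "y = rec_nat 0 (\<lambda>_ y. y^2 + c)"
  have y0: "y 0 = 0" and yS: "\<And>n. y (Suc n) = (y n)^2 + c" by (simp_all add: y_def)
  have y1: "vc 1 (y n)" for n
  proof (induction n)
    case 0 then show ?case by (simp add: y0)
  next
    case (Suc n)
    have "vc (1 + 1) (y n * y n)" using vc_mult[OF Suc Suc] .
    then have "vc 1 ((y n)^2)" by (simp add: power2_eq_square vc_mono)
    then show ?case by (simp add: yS vc_add c)
  qed
  have ystep: "vc (int n + 1) (y (Suc n) - y n)" for n
  proof (induction n)
    case 0 then show ?case using c by (simp add: y0 yS)
  next
    case (Suc n)
    have "y (Suc (Suc n)) - y (Suc n) = (y (Suc n) - y n) * (y (Suc n) + y n)"
      by (simp add: yS algebra_simps power2_eq_square)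
    moreover have "vc (int n + 1 + 1) ((y (Suc n) - y n) * (y (Suc n) + y n))"
      using vc_mult[OF Suc vc_add[OF y1 y1]] by simp
    ultimately show ?case by simp
  qed
  have ycauchy: "vc (int N + 1) (y (N + j) - y N)" for N j
  proof (induction j)
    case 0 then show ?case by simp
  next
    case (Suc j)
    have "vc (int (N + j) + 1) (y (Suc (N + j)) - y (N + j))" by (rule ystep)
    then have "vc (int N + 1) (y (Suc (N + j)) - y (N + j))" by (rule vc_mono) simp
    from vc_add[OF this Suc] show ?case by simp
  qed
  have cauchy: "\<forall>k. \<exists>N. \<forall>m\<ge>N. \<forall>n\<ge>N. vc k (y m - y n)"
  proof
    fix k :: int
    have N: "k \<le> int (nat k) + 1" by simp
    define N where "N = nat k"
    note N = N[folded N_def]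
    show "\<exists>N. \<forall>m\<ge>N. \<forall>n\<ge>N. vc k (y m - y n)"
    proof (intro exI allI impI)
      fix m n assume "N \<le> m" "N \<le> n"
      then obtain a b where "m = N + a" "n = N + b" by (metis le_add_diff_inverse)
      then have "y m - y n = (y (N + a) - y N) - (y (N + b) - y N)" by simp
      moreover have "vc (int N + 1) ((y (N + a) - y N) - (y (N + b) - y N))"
        using vc_diff[OF ycauchy ycauchy] .
      ultimately show "vc k (y m - y n)" using N vc_mono by metis
    qed
  qed
  then obtain l where l: "\<forall>k. \<exists>N. \<forall>n\<ge>N. vc k (y n - l)"
    using comp unfolding vcomplete_def by blast
  have "vc k (l * l - l + c)" for k
  proof -
    obtain N where N: "\<forall>n\<ge>N. vc (max k 0) (y n - l)" using l by blast
    have a: "vc (max k 0) (y N - l)" and b: "vc (max k 0) (y (Suc N) - l)" using N by auto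
    have lO: "vc 0 l"
    proof -
      have "vc 0 (y N - l)" using a vc_mono by fastforce
      moreover have "vc 0 (y N)" using y1[of N] vc_mono by fastforce
      ultimately show ?thesis using vc_diff by fastforce
    qed
    have "vc 0 (l + y N)" using lO y1[of N] vc_mono vc_add by fastforce
    then have "vc (max k 0 + 0) ((y N - l) * (l + y N))" using vc_mult a by blast
    then have "vc (max k 0) ((y N - l) * (l + y N) - (y (Suc N) - l))" using b vc_diff by simp
    moreover have "(y N - l) * (l + y N) - (y (Suc N) - l) = - (l * l - l + c)"
      by (simp add: yS algebra_simps power2_eq_square)
    ultimately have "vc (max k 0) (l * l - l + c)" by (metis vc_neg)
    then show ?thesis by (rule vc_mono) simp
  qed
  then show ?thesis using vc_all0 by blast
qed

end


definition kconj :: "'a::field \<times> 'a \<Rightarrow> 'a \<times> 'a" where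
  "kconj z = (fst z, - snd z)"

lemma knorm_mul: "knorm d (kmul d z w) = knorm d z * knorm d w"
  by (simp add: knorm_def kmul_def power2_eq_square algebra_simps)

lemma knorm_ksc: "knorm d (ksc c z) = c^2 * knorm d z"
  by (simp add: knorm_def ksc_def power2_eq_square algebra_simps)

lemma knorm_kpow: "knorm d (kpow d z n) = knorm d z ^ n"
proof (induction n)
  case 0 then show ?case by (simp add: knorm_def)
next
  case (Suc n) then show ?case by (simp add: knorm_mul)
qed

lemma knorm_neg[simp]: "knorm d (- z) = knorm d z"
  by (simp add: knorm_def)

lemma kbil_eq: "kbil d x y = 2 * (fst x * fst y - d * snd x * snd y)"
  by (simp add: kbil_def knorm_def power2_eq_square algebra_simps)

lemma knorm_add: "knorm d (x + y) = knorm d x + knorm d y + kbil d x y"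
  by (simp add: kbil_def)

lemma knorm_zero[simp]: "knorm d 0 = 0" by (simp add: knorm_def)

definition phi :: "'a::field \<Rightarrow> 'a \<times> 'a \<Rightarrow> 'a" where
  "phi t z = fst z + t * snd z"

lemma phi_mul: "d = t^2 \<Longrightarrow> phi t (kmul d z w) = phi t z * phi t w"
  by (simp add: phi_def kmul_def power2_eq_square algebra_simps)
lemma phi_kpow: "d = t^2 \<Longrightarrow> phi t (kpow d z n) = phi t z ^ n"
  by (induction n) (simp_all add: phi_mul, simp add: phi_def)
lemma phi_ksc: "phi t (ksc c z) = c * phi t z"
  by (simp add: phi_def ksc_def algebra_simps)
lemma phi_add: "phi t (x + y) = phi t x + phi t y"
  by (simp add: phi_def algebra_simps)
lemma phi_sum: "phi t (sum f A) = (\<Sum>i\<in>A. phi t (f i))"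
  by (induction A rule: infinite_finite_induct) (simp_all add: phi_add, simp_all add: phi_def)
lemma phi_zero[simp]: "phi t 0 = 0" by (simp add: phi_def)

lemma knorm_phi: "d = t^2 \<Longrightarrow> knorm d z = phi t z * phi (-t) z"
  by (simp add: phi_def knorm_def power2_eq_square algebra_simps)

context dval begin

lemma in_OK:
  assumes "2 * fst z \<in> Ov" "knorm d z \<in> Ov"
  shows "z \<in> OK d v"
proof -
  define cs where "cs = (\<lambda>i::nat. if i = 0 then knorm d z else - (2 * fst z))"
  have "\<forall>i<2. cs i \<in> Ov" using assms by (auto simp: cs_def less_2_cases_iff)
  moreover have "kpow d z 2 + (\<Sum>i<2. ksc (cs i) (kpow d z i)) = 0"
    by (simp add: cs_def numeral_2_eq_2 kmul_def ksc_def zero_prod_def knorm_def power2_eq_square algebra_simps)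
  ultimately show ?thesis unfolding OK_def by blast
qed

lemma OK_split_phi:
  assumes "z \<in> OK d v" "d = t^2"
  shows "phi t z \<in> Ov"
proof -
  obtain n cs where cs: "\<forall>i<n. cs i \<in> Ov" and eq: "kpow d z n + (\<Sum>i<n. ksc (cs i) (kpow d z i)) = 0"
    using assms(1) unfolding OK_def by blast
  have "phi t (kpow d z n + (\<Sum>i<n. ksc (cs i) (kpow d z i))) = 0" using eq by simp
  then have "phi t z ^ n + (\<Sum>i<n. cs i * phi t z ^ i) = 0"
    by (simp add: phi_add phi_sum phi_ksc phi_kpow assms(2))
  then show ?thesis using integral_in_O cs by blast
qed

lemma OK_split_iff:
  assumes "d = t^2"
  shows "z \<in> OK d v \<longleftrightarrow> phi t z \<in> Ov \<and> phi (-t) z \<in> Ov"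
proof
  assume "z \<in> OK d v"
  then show "phi t z \<in> Ov \<and> phi (-t) z \<in> Ov"
    using OK_split_phi[of z d t] OK_split_phi[of z d "-t"] assms by simp
next
  assume h: "phi t z \<in> Ov \<and> phi (-t) z \<in> Ov"
  have "2 * fst z = phi t z + phi (-t) z" by (simp add: phi_def)
  moreover have "knorm d z = phi t z * phi (-t) z" by (rule knorm_phi[OF assms])
  ultimately show "z \<in> OK d v" using h in_OK O_add O_mult by metis
qed

end

locale lfield = dval +
  fixes d :: 'a
  assumes comp: "vcomplete v" and two: "(2::'a) \<noteq> 0" and d0: "d \<noteq> 0"
begin

lemma v2: "0 \<le> v 2"
  using O_numeral[of "num.Bit0 num.One"] two by (simp add: vring_def)

lemma key:
  assumes nsq: "\<nexists>t. d = t ^ 2" and N: "knorm d z \<noteq> 0" and a: "fst z \<noteq> 0"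
  shows "v (knorm d z) \<le> 2 * v (2 * fst z)"
proof (rule ccontr)
  assume "\<not> ?thesis"
  then have lt: "2 * v (2 * fst z) < v (knorm d z)" by simp
  define A where "A = 2 * fst z"
  have A0: "A \<noteq> 0" using a two by (simp add: A_def)
  define c where "c = knorm d z / A^2"
  have "v c = v (knorm d z) - 2 * v A" unfolding c_def using A0 N by (simp add: vdiv vsq)
  then have "vc 1 c" using lt by (simp add: vclose_def A_def)
  then obtain y where y: "y * y - y + c = 0" using hensel_aux comp by blast
  define x where "x = A * y"
  have "x * x - A * x + knorm d z = A^2 * (y * y - y + c)"
    using A0 by (simp add: x_def c_def power2_eq_square algebra_simps)
  then have "x * x - A * x + knorm d z = 0" using y by simp
  then have eq: "(x - fst z)^2 = d * (snd z)^2"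
    by (simp add: A_def knorm_def power2_eq_square algebra_simps)
  show False
  proof (cases "snd z = 0")
    case True
    then have "c = 1/4" using A0 a by (simp add: c_def A_def knorm_def power2_eq_square)
    have four: "(4::'a) \<noteq> 0" using two by (metis mult_2 numeral_Bit0 mult_eq_0_iff one_add_one)
    have "v (1/4::'a) = v (1::'a) - v 4" using vdiv[of 1 4] four by simp
    then have "v c = - v 4" using \<open>c = 1/4\<close> v1 by (metis diff_0)
    moreover have "v (4::'a) = v 2 + v 2" using vmult[of 2 2] two by simp
    ultimately have "v c \<le> 0" using v2 by simp
    with \<open>vc 1 c\<close> show False using \<open>c = 1/4\<close> four by (simp add: vclose_def)
  next
    case False
    then have "d = ((x - fst z) / snd z)^2" using eq by (simp add: power_divide)
    then show False using nsq by blast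
  qed
qed

end



lemma knorm_kconj[simp]: "knorm d (kconj y) = knorm d y"
  by (simp add: knorm_def kconj_def)

context lfield begin

lemma knorm_eq0_field:
  assumes nsq: "\<nexists>t. d = t ^ 2"
  shows "knorm d z = 0 \<longleftrightarrow> z = 0"
proof
  assume h: "knorm d z = 0"
  show "z = 0"
  proof (cases "snd z = 0")
    case True
    then show ?thesis using h by (simp add: knorm_def prod_eq_iff)
  next
    case False
    then have "d = (fst z / snd z)^2" using h by (simp add: knorm_def power_divide)
    then show ?thesis using nsq by blast
  qed
qed simp

lemma kbil_vc:
  assumes nsq: "\<nexists>t. d = t ^ 2" and x: "vc k (knorm d x)" and y: "vc k (knorm d y)"
  shows "vc k (kbil d x y)"
proof (cases "kbil d x y = 0")
  case False
  define w where "w = kmul d x (kconj y)"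
  have bw: "kbil d x y = 2 * fst w"
    by (simp add: w_def kbil_eq kmul_def kconj_def)
  then have fw: "fst w \<noteq> 0" using False by auto
  have x0: "x \<noteq> 0" and y0: "y \<noteq> 0" using False by (auto simp: kbil_eq)
  have nx: "knorm d x \<noteq> 0" and ny: "knorm d y \<noteq> 0"
    using x0 y0 knorm_eq0_field[OF nsq] by auto
  have nw: "knorm d w = knorm d x * knorm d y" by (simp add: w_def knorm_mul)
  have "v (knorm d w) \<le> 2 * v (kbil d x y)"
    using key[OF nsq _ fw] nw nx ny bw by simp
  moreover have "v (knorm d w) = v (knorm d x) + v (knorm d y)" using nw nx ny vmult by simp
  moreover have "k \<le> v (knorm d x)" "k \<le> v (knorm d y)" using x y nx ny by (auto simp: vclose_def)
  ultimately show ?thesis using False by (simp add: vclose_def)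
qed simp

lemma Nvc_add:
  assumes nsq: "\<nexists>t. d = t ^ 2" and x: "vc k (knorm d x)" and y: "vc k (knorm d y)"
  shows "vc k (knorm d (x + y))"
  unfolding knorm_add using vc_add[OF vc_add[OF x y] kbil_vc[OF nsq x y]] .

lemma Nvc_sum:
  assumes nsq: "\<nexists>t. d = t ^ 2"
  shows "(\<And>i. i \<in> A \<Longrightarrow> vc k (knorm d (f i))) \<Longrightarrow> vc k (knorm d (sum f A))"
  by (induction A rule: infinite_finite_induct) (auto intro: Nvc_add[OF nsq])

lemma OK_field_iff:
  assumes nsq: "\<nexists>t. d = t ^ 2"
  shows "z \<in> OK d v \<longleftrightarrow> knorm d z \<in> Ov"
proof
  assume "z \<in> OK d v"
  then obtain n cs where cs: "\<forall>i<n. cs i \<in> Ov"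
    and eq: "kpow d z n + (\<Sum>i<n. ksc (cs i) (kpow d z i)) = 0"
    unfolding OK_def by blast
  show "knorm d z \<in> Ov"
  proof (rule ccontr)
    assume nz: "knorm d z \<notin> Ov"
    then have N0: "knorm d z \<noteq> 0" and W: "v (knorm d z) < 0" by (auto simp: vring_def)
    define W where "W = v (knorm d z)"
    have "vc ((int n - 1) * W) (knorm d (ksc (cs i) (kpow d z i)))" if "i < n" for i
    proof -
      have "vc (0 + int i * W) ((cs i)^2 * knorm d z ^ i)"
        using vc_mult[of 0 "(cs i)^2" "int i * W" "knorm d z ^ i"] cs that O_pow[of "cs i" 2]
        by (simp add: vring_vc vclose_def vpow N0 W_def)
      then have "vc (int i * W) (knorm d (ksc (cs i) (kpow d z i)))"
        by (simp add: knorm_ksc knorm_kpow)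
      then show ?thesis apply (rule vc_mono) using that W
        by (simp add: W_def mult_right_mono_neg)
    qed
    then have "vc ((int n - 1) * W) (knorm d (\<Sum>i<n. ksc (cs i) (kpow d z i)))"
      by (intro Nvc_sum[OF nsq]) auto
    moreover have "kpow d z n = - (\<Sum>i<n. ksc (cs i) (kpow d z i))"
      using eq by (simp add: eq_neg_iff_add_eq_0)
    ultimately have "vc ((int n - 1) * W) (knorm d (kpow d z n))"
      by (metis knorm_neg)
    then have "vc ((int n - 1) * W) (knorm d z ^ n)"
      by (simp add: knorm_kpow)
    then show False using N0 W by (simp add: vclose_def vpow W_def algebra_simps)
  qed
next
  assume h: "knorm d z \<in> Ov"
  have "2 * fst z \<in> Ov"
  proof (cases "fst z = 0")
    case False
    then have "z \<noteq> 0" by auto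
    then have N0: "knorm d z \<noteq> 0" using knorm_eq0_field[OF nsq] by simp
    have "v (knorm d z) \<le> 2 * v (2 * fst z)" using key[OF nsq N0 False] .
    moreover have "0 \<le> v (knorm d z)" using h N0 by (simp add: vring_def)
    ultimately show ?thesis by (simp add: vring_def)
  qed simp
  then show "z \<in> OK d v" using in_OK h by blast
qed

lemma OK_char:
  shows "z \<in> OK d v \<longleftrightarrow> 2 * fst z \<in> Ov \<and> knorm d z \<in> Ov"
proof (cases "\<exists>t. d = t^2")
  case True
  then obtain t where t: "d = t^2" by blast
  have "2 * fst z = phi t z + phi (-t) z" by (simp add: phi_def)
  moreover have "knorm d z = phi t z * phi (-t) z" by (rule knorm_phi[OF t])
  ultimately show ?thesis using OK_split_iff[OF t] in_OK O_add O_mult by metis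
next
  case False
  show ?thesis
  proof
    assume "z \<in> OK d v"
    then have h: "knorm d z \<in> Ov" using OK_field_iff[OF False] by simp
    then have "z \<in> OK d v" using OK_field_iff[OF False] by simp
    have "2 * fst z \<in> Ov"
    proof (cases "fst z = 0")
      case f: False
      then have "z \<noteq> 0" by auto
      then have N0: "knorm d z \<noteq> 0" using knorm_eq0_field[OF False] by simp
      have "v (knorm d z) \<le> 2 * v (2 * fst z)" using key[OF False N0 f] .
      moreover have "0 \<le> v (knorm d z)" using h N0 by (simp add: vring_def)
      ultimately show ?thesis by (simp add: vring_def)
    qed simp
    then show "2 * fst z \<in> Ov \<and> knorm d z \<in> Ov" using h by simp
  qed (use in_OK in blast)
qed

end


definition kalpha :: "'a::field \<Rightarrow> 'a \<times> 'a \<Rightarrow> 'a \<times> 'a" where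
  "kalpha d a = ksc (1 / knorm d a) (kmul d a a)"

lemma refl_formula:
  assumes "knorm d a \<noteq> 0"
  shows "krefl d a (krefl d (1,0) x) = kmul d (kalpha d a) x"
proof -
  obtain p q where a: "a = (p, q)" by (cases a)
  obtain r s where x: "x = (r, s)" by (cases x)
  define N where "N = p^2 - d * q^2"
  have N0: "N \<noteq> 0" using assms by (simp add: N_def a knorm_def)
  have k1: "krefl d (1,0) x = (-r, s)"
    by (simp add: krefl_def kbil_eq ksc_def x knorm_def)
  have "krefl d a (-r, s) = ((r * (p^2 + d*q^2) + 2*d*p*q*s) / N, (s * (p^2 + d*q^2) + 2*p*q*r) / N)"
    using N0 unfolding krefl_def kbil_eq ksc_def a
    by (simp add: knorm_def N_def[symmetric] field_simps) (simp add: N_def power2_eq_square algebra_simps)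
  moreover have "kmul d (kalpha d a) x = ((r * (p^2 + d*q^2) + 2*d*p*q*s) / N, (s * (p^2 + d*q^2) + 2*p*q*r) / N)"
    using N0 unfolding kalpha_def kmul_def ksc_def a x
    by (simp add: knorm_def N_def[symmetric] field_simps) (simp add: power2_eq_square algebra_simps)
  ultimately show ?thesis using k1 by simp
qed

lemma knorm_kalpha: "knorm d a \<noteq> 0 \<Longrightarrow> knorm d (kalpha d a) = 1"
  by (simp add: kalpha_def knorm_ksc knorm_mul power2_eq_square field_simps)

lemma kmul_assoc: "kmul d (kmul d x y) z = kmul d x (kmul d y z)"
  by (simp add: kmul_def algebra_simps)

lemma kmul_conj_self: "kmul d (kconj a) a = (knorm d a, 0)"
  by (simp add: kmul_def kconj_def knorm_def power2_eq_square algebra_simps)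

lemma kmul_one: "kmul d (1, 0) x = x"
  by (simp add: kmul_def)

lemma kmul_inv:
  assumes "knorm d a = 1"
  shows "kmul d (kconj a) (kmul d a x) = x" "kmul d a (kmul d (kconj a) x) = x"
proof -
  show "kmul d (kconj a) (kmul d a x) = x"
    by (simp add: kmul_assoc[symmetric] kmul_conj_self assms kmul_one)
  have "kmul d a (kconj a) = (knorm d a, 0)"
    by (simp add: kmul_def kconj_def knorm_def power2_eq_square algebra_simps)
  then show "kmul d a (kmul d (kconj a) x) = x"
    by (simp add: kmul_assoc[symmetric] assms kmul_one)
qed

lemma knorm_kconj_eq: "knorm d (kconj a) = knorm d a" by (simp add: knorm_def kconj_def)

lemma mult_SOV:
  assumes "knorm d a = 1"
  shows "kmul d a \<in> SOV d"
proof -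
  have "klinear (kmul d a)"
    unfolding klinear_def by (simp add: kmul_def ksc_def algebra_simps)
  moreover have "bij (kmul d a)"
    by (rule bij_betw_byWitness[where f'="kmul d (kconj a)"]) (auto simp: kmul_inv assms)
  moreover have "\<forall>x. knorm d (kmul d a x) = knorm d x" by (simp add: knorm_mul assms)
  moreover have "kdet (kmul d a) = 1"
    using assms by (simp add: kdet_def kmul_def knorm_def power2_eq_square mult.assoc)
  ultimately show ?thesis by (simp add: SOV_def OV_def)
qed

lemma mult_image:
  assumes n: "knorm d a = 1" and L1: "\<And>x. x \<in> L \<Longrightarrow> kmul d a x \<in> L"
    and L2: "\<And>x. x \<in> L \<Longrightarrow> kmul d (kconj a) x \<in> L"
  shows "kmul d a ` L = L"
proof
  show "kmul d a ` L \<subseteq> L" using L1 by auto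
  show "L \<subseteq> kmul d a ` L"
  proof
    fix x assume "x \<in> L"
    then have "kmul d (kconj a) x \<in> L" by (rule L2)
    moreover have "x = kmul d a (kmul d (kconj a) x)" using kmul_inv[OF n] by simp
    ultimately show "x \<in> kmul d a ` L" by blast
  qed
qed

lemma sn_intro:
  assumes N: "knorm d a \<noteq> 0" and G: "kmul d (kalpha d a) \<in> G"
  shows "knorm d a \<in> spinor_norms d G"
proof -
  have "kmul d (kalpha d a) = foldr (\<lambda>a h. krefl d a \<circ> h) [a, (1,0)] id"
    by (rule ext) (simp add: refl_formula[OF N])
  moreover have "knorm d a = prod_list (map (knorm d) [a, (1,0)])" by (simp add: knorm_def)
  moreover have "\<forall>b\<in>set [a, (1,0)]. knorm d b \<noteq> 0" using N by (simp add: knorm_def)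
  ultimately show ?thesis unfolding spinor_norms_def using G by blast
qed

lemma sn_field_sub:
  assumes "\<nexists>t. d = t ^ 2"
  shows "spinor_norms d G \<subseteq> {knorm d z | z. knorm d z \<noteq> 0}"
proof
  fix c assume "c \<in> spinor_norms d G"
  then obtain as where as: "\<forall>a\<in>set as. knorm d a \<noteq> 0" and c: "c = prod_list (map (knorm d) as)"
    unfolding spinor_norms_def by blast
  have "prod_list (map (knorm d) as) = knorm d (foldr (kmul d) as (1,0)) \<and> prod_list (map (knorm d) as) \<noteq> 0"
    using as
  proof (induction as)
    case Nil then show ?case by (simp add: knorm_def)
  next
    case (Cons a as) then show ?case by (simp add: knorm_mul) metis
  qed
  then show "c \<in> {knorm d z | z. knorm d z \<noteq> 0}" using c by (metis (mono_tags, lifting) mem_Collect_eq)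
qed



lemma phi_kconj: "phi t (kconj z) = phi (-t) z"
  by (simp add: phi_def kconj_def)

lemma kbil_phi:
  assumes "d = t^2"
  shows "kbil d a w = phi t a * phi (-t) w + phi t w * phi (-t) a"
proof -
  have "kbil d a w = phi t (a+w) * phi (-t) (a+w) - phi t a * phi (-t) a - phi t w * phi (-t) w"
    unfolding kbil_def knorm_phi[OF assms] ..
  then show ?thesis by (simp add: phi_add algebra_simps)
qed

lemma split_refl_phi:
  assumes dt: "d = t^2" and N: "knorm d a \<noteq> 0"
  shows "phi t (krefl d a w) = - (phi t a / phi (-t) a) * phi (-t) w"
proof -
  have N': "phi t a * phi (-t) a \<noteq> 0" using N knorm_phi[OF dt] by simp
  have "phi t (krefl d a w) = phi t w - kbil d a w / knorm d a * phi t a"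
    using N by (simp add: krefl_def phi_def ksc_def field_simps)
  also have "\<dots> = - (phi t a / phi (-t) a) * phi (-t) w"
    using N' by (simp add: kbil_phi[OF dt] knorm_phi[OF dt] field_simps)
  finally show ?thesis .
qed

lemma split_fold:
  assumes dt: "d = t^2" and as: "\<forall>a\<in>set as. knorm d a \<noteq> 0"
  shows "\<exists>l m. l \<noteq> 0 \<and> m \<noteq> 0 \<and> prod_list (map (knorm d) as) = (-1)^length as * l * m^2 \<and>
     ((\<forall>w. phi t (foldr (\<lambda>a h. krefl d a \<circ> h) as id w) = l * phi (-t) w \<and>
           phi (-t) (foldr (\<lambda>a h. krefl d a \<circ> h) as id w) = phi t w / l) \<or>
      (\<forall>w. phi t (foldr (\<lambda>a h. krefl d a \<circ> h) as id w) = l * phi t w \<and>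
           phi (-t) (foldr (\<lambda>a h. krefl d a \<circ> h) as id w) = phi (-t) w / l))"
  using as
proof (induction as)
  case Nil
  show ?case by (intro exI[of _ 1]) auto
next
  case (Cons a as)
  define g where "g = foldr (\<lambda>a h. krefl d a \<circ> h) as id"
  have "\<exists>l m. l \<noteq> 0 \<and> m \<noteq> 0 \<and> prod_list (map (knorm d) as) = (-1)^length as * l * m^2 \<and>
    ((\<forall>w. phi t (g w) = l * phi (-t) w \<and> phi (-t) (g w) = phi t w / l) \<or>
      (\<forall>w. phi t (g w) = l * phi t w \<and> phi (-t) (g w) = phi (-t) w / l))"
    unfolding g_def by (rule Cons.IH) (use Cons.prems in simp)
  then obtain l m where l: "l \<noteq> 0" "m \<noteq> 0" and pr: "prod_list (map (knorm d) as) = (-1)^length as * l * m^2"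
    and cases: "(\<forall>w. phi t (g w) = l * phi (-t) w \<and> phi (-t) (g w) = phi t w / l) \<or>
      (\<forall>w. phi t (g w) = l * phi t w \<and> phi (-t) (g w) = phi (-t) w / l)"
    by blast
  have Na: "knorm d a \<noteq> 0" using Cons by simp
  define x0 where "x0 = phi t a"
  define y0 where "y0 = phi (-t) a"
  have xy: "x0 \<noteq> 0" "y0 \<noteq> 0" "knorm d a = x0 * y0"
    using Na knorm_phi[OF dt, of a] by (auto simp: x0_def y0_def)
  have dt': "d = (-t)^2" using dt by simp
  have r1: "phi t (krefl d a w) = - (x0 / y0) * phi (-t) w" for w
    using split_refl_phi[OF dt Na] by (simp add: x0_def y0_def)
  have r2: "phi (-t) (krefl d a w) = - (y0 / x0) * phi t w" for w
    using split_refl_phi[OF dt' Na] by (simp add: x0_def y0_def)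
  define l' where "l' = - (x0 / (y0 * l))"
  define m' where "m' = y0 * l * m"
  have l'0: "l' \<noteq> 0" "m' \<noteq> 0" using xy l by (auto simp: l'_def m'_def)
  have pr': "prod_list (map (knorm d) (a # as)) = (-1)^length (a # as) * l' * m'^2"
    using xy l by (simp add: pr l'_def m'_def power2_eq_square field_simps)
  have fo: "foldr (\<lambda>a h. krefl d a \<circ> h) (a # as) id = krefl d a \<circ> g" by (simp add: g_def)
  from cases show ?case
  proof
    assume c: "\<forall>w. phi t (g w) = l * phi (-t) w \<and> phi (-t) (g w) = phi t w / l"
    have "\<forall>w. phi t ((krefl d a \<circ> g) w) = l' * phi t w \<and> phi (-t) ((krefl d a \<circ> g) w) = phi (-t) w / l'"
      using c xy l by (simp add: r1 r2 l'_def field_simps)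
    then show ?thesis using l'0 pr' fo by metis
  next
    assume c: "\<forall>w. phi t (g w) = l * phi t w \<and> phi (-t) (g w) = phi (-t) w / l"
    have "\<forall>w. phi t ((krefl d a \<circ> g) w) = l' * phi (-t) w \<and> phi (-t) ((krefl d a \<circ> g) w) = phi t w / l'"
      using c xy l by (simp add: r1 r2 l'_def field_simps)
    then show ?thesis using l'0 pr' fo by metis
  qed
qed

context lfield begin

lemma four: "(4::'a) \<noteq> 0"
  using two by (metis mult_2 numeral_Bit0 mult_eq_0_iff one_add_one)

lemma field_sn_super:
  assumes nsq: "\<nexists>t. d = t ^ 2"
  shows "{knorm d z | z. knorm d z \<noteq> 0} \<subseteq> spinor_norms d (SOlat d (OK d v))"
proof
  fix c assume "c \<in> {knorm d z | z. knorm d z \<noteq> 0}"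
  then obtain z where c: "c = knorm d z" and N: "knorm d z \<noteq> 0" by blast
  define \<alpha> where "\<alpha> = kalpha d z"
  have n1: "knorm d \<alpha> = 1" using knorm_kalpha[OF N] by (simp add: \<alpha>_def)
  have "kmul d \<alpha> ` OK d v = OK d v"
    by (rule mult_image[OF n1]) (simp_all add: OK_field_iff[OF nsq] knorm_mul n1 knorm_kconj_eq)
  then have "kmul d \<alpha> \<in> SOlat d (OK d v)" using mult_SOV[OF n1] by (simp add: SOlat_def)
  then show "c \<in> spinor_norms d (SOlat d (OK d v))" using sn_intro[OF N] c by (simp add: \<alpha>_def)
qed

lemma split_sn_super:
  assumes dt: "d = t^2"
  shows "{u * s ^ 2 | u s. u \<in> vunits v \<and> s \<noteq> 0} \<subseteq> spinor_norms d (SOlat d (OK d v))"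
proof
  fix c assume "c \<in> {u * s ^ 2 | u s. u \<in> vunits v \<and> s \<noteq> 0}"
  then obtain u s where c: "c = u * s^2" and u: "u \<noteq> 0" "v u = 0" and s: "s \<noteq> 0"
    by (auto simp: vunits_def)
  have t0: "t \<noteq> 0" using d0 dt by auto
  define a where "a = ((u*s + s)/2, (u*s - s)/(2*t))"
  have pa: "phi t a = u * s" "phi (-t) a = s"
    using two t0 four by (simp_all add: a_def phi_def field_simps)
  have dt': "d = (-t)^2" using dt by simp
  have Na: "knorm d a = u * s^2" using knorm_phi[OF dt, of a] pa by (simp add: power2_eq_square)
  then have N: "knorm d a \<noteq> 0" using u s by simp
  define \<alpha> where "\<alpha> = kalpha d a"
  have n1: "knorm d \<alpha> = 1" using knorm_kalpha[OF N] by (simp add: \<alpha>_def)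
  have p1: "phi t \<alpha> = u" and p2: "phi (-t) \<alpha> = inverse u"
    using u s unfolding \<alpha>_def kalpha_def
    by (simp_all add: phi_ksc phi_mul[OF dt] phi_mul[OF dt'] pa Na field_simps power2_eq_square)
  have uO: "u \<in> Ov" "inverse u \<in> Ov" using u by (simp_all add: vring_def vinv)
  have "kmul d \<alpha> ` OK d v = OK d v"
  proof (rule mult_image[OF n1])
    fix x assume "x \<in> OK d v"
    then have x: "phi t x \<in> Ov" "phi (-t) x \<in> Ov" using OK_split_iff[OF dt] by auto
    show "kmul d \<alpha> x \<in> OK d v" unfolding OK_split_iff[OF dt]
      using x uO by (simp add: phi_mul[OF dt] phi_mul[OF dt'] p1 p2 O_mult)
    show "kmul d (kconj \<alpha>) x \<in> OK d v" unfolding OK_split_iff[OF dt]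
      using x uO by (simp add: phi_mul[OF dt] phi_mul[OF dt'] phi_kconj p1 p2 O_mult)
  qed
  then have "kmul d \<alpha> \<in> SOlat d (OK d v)" using mult_SOV[OF n1] by (simp add: SOlat_def)
  then show "c \<in> spinor_norms d (SOlat d (OK d v))" using sn_intro[OF N] c Na by (simp add: \<alpha>_def)
qed

lemma split_sn_sub:
  assumes dt: "d = t^2"
  shows "spinor_norms d (Olat d (OK d v)) \<subseteq> {u * s ^ 2 | u s. u \<in> vunits v \<and> s \<noteq> 0}"
proof
  fix c assume "c \<in> spinor_norms d (Olat d (OK d v))"
  then obtain g as where g: "g \<in> Olat d (OK d v)" and as: "\<forall>a\<in>set as. knorm d a \<noteq> 0"
    and gf: "g = foldr (\<lambda>a h. krefl d a \<circ> h) as id" and c: "c = prod_list (map (knorm d) as)"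
    unfolding spinor_norms_def by blast
  have t0: "t \<noteq> 0" using d0 dt by auto
  obtain l m where l: "l \<noteq> 0" "m \<noteq> 0" and pr: "c = (-1)^length as * l * m^2"
    and cases: "(\<forall>w. phi t (g w) = l * phi (-t) w \<and> phi (-t) (g w) = phi t w / l) \<or>
      (\<forall>w. phi t (g w) = l * phi t w \<and> phi (-t) (g w) = phi (-t) w / l)"
    using split_fold[OF dt as] gf c by metis
  define ep where "ep = (1/2::'a, 1/(2*t))"
  define em where "em = (1/2::'a, - 1/(2*t))"
  have pe: "phi t ep = 1" "phi (-t) ep = 0" "phi t em = 0" "phi (-t) em = 1"
    using two t0 by (simp_all add: ep_def em_def phi_def field_simps)
  have inO: "ep \<in> OK d v" "em \<in> OK d v" using OK_split_iff[OF dt] pe by auto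
  have gO: "g ep \<in> OK d v" "g em \<in> OK d v" using g inO by (auto simp: Olat_def)
  have lO: "l \<in> Ov \<and> inverse l \<in> Ov"
    using cases
  proof
    assume c: "\<forall>w. phi t (g w) = l * phi (-t) w \<and> phi (-t) (g w) = phi t w / l"
    show ?thesis using c[rule_format, of em] c[rule_format, of ep] gO OK_split_iff[OF dt] pe
      by (auto simp: divide_inverse)
  next
    assume c: "\<forall>w. phi t (g w) = l * phi t w \<and> phi (-t) (g w) = phi (-t) w / l"
    show ?thesis using c[rule_format, of em] c[rule_format, of ep] gO OK_split_iff[OF dt] pe
      by (auto simp: divide_inverse)
  qed
  then have vl: "v l = 0" using l by (simp add: vring_def vinv)
  have "(-1)^length as * l \<in> vunits v"
    using l vl vpow[of "-1::'a" "length as"] by (simp add: vunits_def vmult)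
  then show "c \<in> {u * s ^ 2 | u s. u \<in> vunits v \<and> s \<noteq> 0}" using pr l by blast
qed

end


lemma kbil_add1: "kbil d (x + y) l = kbil d x l + kbil d y l"
  by (simp add: kbil_eq algebra_simps)
lemma kbil_ksc1: "kbil d (ksc c x) l = c * kbil d x l"
  by (simp add: kbil_eq ksc_def algebra_simps)
lemma kbil_neg1: "kbil d (- x) l = - kbil d x l"
  by (simp add: kbil_eq algebra_simps)
lemma kbil_comm: "kbil d x y = kbil d y x"
  by (simp add: kbil_eq algebra_simps)

context lfield begin

abbreviation LL where "LL \<equiv> OK d v"
abbreviation DD where "DD \<equiv> dual_lattice d v (OK d v)"

lemma LL_bil: "x \<in> LL \<Longrightarrow> y \<in> LL \<Longrightarrow> kbil d x y \<in> Ov"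
proof (cases "\<exists>t. d = t^2")
  case True
  then obtain t where t: "d = t^2" by blast
  assume "x \<in> LL" "y \<in> LL"
  then show ?thesis using OK_split_iff[OF t] kbil_phi[OF t] by (auto intro!: O_add O_mult)
next
  case False
  assume "x \<in> LL" "y \<in> LL"
  then show ?thesis using kbil_vc[OF False, of 0 x y] OK_field_iff[OF False] by (simp add: vring_vc)
qed

lemma LL_add: "x \<in> LL \<Longrightarrow> y \<in> LL \<Longrightarrow> x + y \<in> LL"
proof -
  assume x: "x \<in> LL" and y: "y \<in> LL"
  have "kbil d x y \<in> Ov" using LL_bil x y .
  then show ?thesis using x y unfolding OK_char knorm_add
    by (metis O_add distrib_left fst_add)
qed

lemma LL_ksc: "c \<in> Ov \<Longrightarrow> x \<in> LL \<Longrightarrow> ksc c x \<in> LL"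
proof -
  assume c: "c \<in> Ov" and x: "x \<in> LL"
  have "2 * fst (ksc c x) = c * (2 * fst x)" by (simp add: ksc_def)
  moreover have "knorm d (ksc c x) = c^2 * knorm d x" by (rule knorm_ksc)
  ultimately show ?thesis using c x unfolding OK_char by (metis O_mult O_pow)
qed

lemma LL_neg: "x \<in> LL \<Longrightarrow> - x \<in> LL"
  unfolding OK_char by simp

lemma LL_diff: "x \<in> LL \<Longrightarrow> y \<in> LL \<Longrightarrow> x - y \<in> LL"
  using LL_add[of x "-y"] LL_neg by simp

lemma LL_0: "0 \<in> LL" unfolding OK_char by simp

lemma LL_sub_DD: "x \<in> LL \<Longrightarrow> x \<in> DD"
  unfolding dual_lattice_def using LL_bil by blast

lemma DD_add: "x \<in> DD \<Longrightarrow> y \<in> DD \<Longrightarrow> x + y \<in> DD"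
  unfolding dual_lattice_def by (auto simp: kbil_add1 intro: O_add)
lemma DD_ksc: "c \<in> Ov \<Longrightarrow> x \<in> DD \<Longrightarrow> ksc c x \<in> DD"
  unfolding dual_lattice_def by (auto simp: kbil_ksc1 intro: O_mult)
lemma DD_neg: "x \<in> DD \<Longrightarrow> - x \<in> DD"
  unfolding dual_lattice_def by (auto simp: kbil_neg1)
lemma DD_diff: "x \<in> DD \<Longrightarrow> y \<in> DD \<Longrightarrow> x - y \<in> DD"
  using DD_add[of x "-y"] DD_neg by simp

lemma DD_LL_norm: "x \<in> DD \<Longrightarrow> l \<in> LL \<Longrightarrow> knorm d (x + l) - knorm d x \<in> Ov"
proof -
  assume x: "x \<in> DD" and l: "l \<in> LL"
  have "knorm d (x + l) - knorm d x = kbil d x l + knorm d l" by (simp add: knorm_add)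
  moreover have "kbil d x l \<in> Ov" using x l by (simp add: dual_lattice_def)
  moreover have "knorm d l \<in> Ov" using l by (simp add: OK_char)
  ultimately show ?thesis by (simp add: O_add)
qed

context
  fixes f assumes f: "disc_isometry d v LL f"
begin

lemma f_DD: "x \<in> DD \<Longrightarrow> f x \<in> DD"
  using f unfolding disc_isometry_def by blast
lemma f_add: "x \<in> DD \<Longrightarrow> y \<in> DD \<Longrightarrow> f (x + y) - f x - f y \<in> LL"
  using f unfolding disc_isometry_def by blast
lemma f_ksc: "c \<in> Ov \<Longrightarrow> x \<in> DD \<Longrightarrow> f (ksc c x) - ksc c (f x) \<in> LL"
  using f unfolding disc_isometry_def by blast
lemma f_cong: "x \<in> DD \<Longrightarrow> y \<in> DD \<Longrightarrow> x - y \<in> LL \<Longrightarrow> f x - f y \<in> LL"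
  using f unfolding disc_isometry_def by blast
lemma f_inj: "x \<in> DD \<Longrightarrow> y \<in> DD \<Longrightarrow> f x - f y \<in> LL \<Longrightarrow> x - y \<in> LL"
  using f unfolding disc_isometry_def by blast
lemma f_norm: "x \<in> DD \<Longrightarrow> knorm d (f x) - knorm d x \<in> Ov"
  using f unfolding disc_isometry_def by blast

lemma f_LL: "x \<in> LL \<Longrightarrow> f x \<in> LL"
proof -
  assume x: "x \<in> LL"
  have z: "0 \<in> DD" using LL_sub_DD[OF LL_0] .
  have "f (0 + 0) - f 0 - f 0 \<in> LL" using f_add[OF z z] .
  then have f0: "f 0 \<in> LL" using LL_neg[of "- f 0"] by simp
  have "f x - f 0 \<in> LL" using f_cong[OF LL_sub_DD[OF x] z] x by simp
  then show ?thesis using LL_add[OF _ f0] by (metis diff_add_cancel)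
qed

lemma f_bil: "x \<in> DD \<Longrightarrow> y \<in> DD \<Longrightarrow> kbil d (f x) (f y) - kbil d x y \<in> Ov"
proof -
  assume x: "x \<in> DD" and y: "y \<in> DD"
  define l where "l = f (x + y) - f x - f y"
  have l: "l \<in> LL" using f_add[OF x y] by (simp add: l_def)
  have fxy: "f x + f y \<in> DD" using DD_add f_DD x y by blast
  have e1: "knorm d (f x + f y + l) - knorm d (f x + f y) \<in> Ov" using DD_LL_norm[OF fxy l] .
  have e2: "knorm d (f (x + y)) - knorm d (x + y) \<in> Ov" using f_norm DD_add x y by blast
  have e3: "knorm d (f x) - knorm d x \<in> Ov" using f_norm x by blast
  have e4: "knorm d (f y) - knorm d y \<in> Ov" using f_norm y by blast
  have "f x + f y + l = f (x + y)" by (simp add: l_def)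
  then have "kbil d (f x) (f y) - kbil d x y =
     (knorm d (f (x + y)) - knorm d (x + y)) - (knorm d (f x + f y + l) - knorm d (f x + f y))
     - (knorm d (f x) - knorm d x) - (knorm d (f y) - knorm d y)"
    by (simp add: kbil_def)
  then show ?thesis using e1 e2 e3 e4 by (simp add: O_diff)
qed

lemma basis_lemma:
  assumes e1: "e1 \<in> DD" and e2: "e2 \<in> DD"
    and span: "\<And>x. x \<in> DD \<Longrightarrow> \<exists>A B. A \<in> Ov \<and> B \<in> Ov \<and> x = ksc A e1 + ksc B e2"
    and g: "klinear g"
    and g1: "f e1 - g e1 \<in> LL" and g2: "f e2 - g e2 \<in> LL"
  shows "\<forall>x\<in>DD. g x - f x \<in> LL"
proof
  fix x assume x: "x \<in> DD"
  obtain A B where AB: "A \<in> Ov" "B \<in> Ov" and xe: "x = ksc A e1 + ksc B e2" using span[OF x] by blast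
  have a1: "ksc A e1 \<in> DD" "ksc B e2 \<in> DD" using DD_ksc AB e1 e2 by auto
  have t1: "f x - f (ksc A e1) - f (ksc B e2) \<in> LL" using f_add[OF a1] xe by simp
  have t2: "f (ksc A e1) - ksc A (f e1) \<in> LL" using f_ksc AB e1 by blast
  have t3: "f (ksc B e2) - ksc B (f e2) \<in> LL" using f_ksc AB e2 by blast
  have t4: "ksc A (f e1 - g e1) \<in> LL" using LL_ksc AB g1 by blast
  have t5: "ksc B (f e2 - g e2) \<in> LL" using LL_ksc AB g2 by blast
  have gx: "g x = ksc A (g e1) + ksc B (g e2)" using g xe unfolding klinear_def by metis
  have ksc_diff: "\<And>c u w. ksc c (u - w) = ksc c u - ksc c w" by (simp add: ksc_def algebra_simps)
  have eq: "f x - g x = (f x - f (ksc A e1) - f (ksc B e2)) + (f (ksc A e1) - ksc A (f e1))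
     + (f (ksc B e2) - ksc B (f e2)) + ksc A (f e1 - g e1) + ksc B (f e2 - g e2)"
    unfolding gx ksc_diff by (simp only: diff_add_cancel add_diff_eq diff_diff_eq2) (simp add: algebra_simps)
  have "(f x - f (ksc A e1) - f (ksc B e2)) + (f (ksc A e1) - ksc A (f e1))
     + (f (ksc B e2) - ksc B (f e2)) + ksc A (f e1 - g e1) + ksc B (f e2 - g e2) \<in> LL"
    by (intro LL_add t1 t2 t3 t4 t5)
  then have "f x - g x \<in> LL" unfolding eq .
  then have "- (f x - g x) \<in> LL" by (rule LL_neg)
  then show "g x - f x \<in> LL" by simp
qed

end

lemma id_SOlat: "id \<in> SOlat d LL"
proof -
  have "klinear (id :: 'a \<times> 'a \<Rightarrow> _)" by (simp add: klinear_def)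
  moreover have "kdet (id :: 'a \<times> 'a \<Rightarrow> _) = 1" by (simp add: kdet_def)
  ultimately show ?thesis unfolding SOlat_def SOV_def OV_def by simp
qed

lemma neg_SOlat: "uminus \<in> SOlat d LL"
proof -
  have "klinear (uminus :: 'a \<times> 'a \<Rightarrow> _)" by (simp add: klinear_def ksc_def)
  moreover have "bij (uminus :: 'a \<times> 'a \<Rightarrow> _)" by (simp add: bij_uminus)
  moreover have "uminus ` LL = LL"
  proof
    show "uminus ` LL \<subseteq> LL" using LL_neg by auto
    show "LL \<subseteq> uminus ` LL" using LL_neg by (metis image_eqI minus_minus subsetI)
  qed
  moreover have "\<forall>x. knorm d (- x) = knorm d x" by simp
  ultimately show ?thesis unfolding SOlat_def SOV_def OV_def kdet_def by (simp add: knorm_def)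
qed

end


context dval begin

lemma vc_div: "vc k x \<Longrightarrow> y \<noteq> 0 \<Longrightarrow> vc (k - v y) (x / y)"
  by (cases "x = 0") (simp_all add: vclose_def vdiv)

lemma O_div_vc: "vc k x \<Longrightarrow> y \<noteq> 0 \<Longrightarrow> v y \<le> k \<Longrightarrow> x / y \<in> Ov"
  using vc_div[of k x y] by (simp add: vring_vc vc_mono)

lemma vc_mult_cases: "x \<in> Ov \<Longrightarrow> y \<in> Ov \<Longrightarrow> vc 1 (x * y) \<Longrightarrow> vc 1 x \<or> vc 1 y"
  by (cases "x = 0 \<or> y = 0") (auto simp: vclose_def vring_def vmult)

lemma vc_unit_mult: "vc k (x * y) \<Longrightarrow> y \<noteq> 0 \<Longrightarrow> v y = 0 \<Longrightarrow> vc k x"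
  by (cases "x = 0") (auto simp: vclose_def vmult)

lemma not_vc_add: "vc k x \<Longrightarrow> \<not> vc k y \<Longrightarrow> \<not> vc k (x + y)"
  using vc_diff[of k "x + y" x] by auto

lemma vc_of_v: "x \<noteq> 0 \<Longrightarrow> vc (v x) x" by (simp add: vclose_def)

end

locale qp = lfield +
  fixes p :: nat
  assumes prime: "prime p" and char0: "\<forall>n::nat. n > 0 \<longrightarrow> (of_nat n :: 'a) \<noteq> 0"
    and vp: "v (of_nat p) = 1" and card: "card (residue_classes v) = p"
begin

lemma v2_odd: "p \<noteq> 2 \<Longrightarrow> v 2 = 0"
proof (rule ccontr)
  assume p2: "p \<noteq> 2" and "v 2 \<noteq> 0"
  then have v21: "vc 1 (2::'a)" using v2 two by (simp add: vclose_def)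
  have "p > 2" using prime p2 prime_ge_2_nat[of p] by linarith
  then have "odd p" using prime prime_odd_nat by blast
  then obtain k where k: "p = 2 * k + 1" by (metis oddE)
  have "(of_nat p :: 'a) = 2 * of_nat k + 1" by (simp add: k)
  then have one: "(1::'a) = of_nat p - 2 * of_nat k" by simp
  have "p > 0" using prime prime_gt_0_nat by blast
  then have "vc 1 (of_nat p :: 'a)" using char0 vp by (simp add: vclose_def)
  moreover have "vc (1 + 0) (2 * of_nat k :: 'a)"
    by (rule vc_mult[OF v21]) (simp add: vring_vc[symmetric])
  ultimately have "vc 1 (1::'a)" using one vc_diff by fastforce
  then show False by (simp add: vclose_def)
qed

lemma v2_two: "p = 2 \<Longrightarrow> v 2 = 1"
  using vp by simp

lemma res2:
  assumes p2: "p = 2" and x: "x \<in> Ov"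
  shows "vc 1 x \<or> vc 1 (x - 1)"
proof (rule ccontr)
  assume h: "\<not> (vc 1 x \<or> vc 1 (x - 1))"
  define C where "C = (\<lambda>x. {y \<in> vring v. x - y \<in> vmax v})"
  have RC: "residue_classes v = C ` vring v" by (simp add: residue_classes_def C_def)
  have fin: "finite (residue_classes v)" using card p2 by (metis card.infinite zero_neq_numeral)
  have "1 \<in> C 1" "1 \<notin> C 0" by (simp_all add: C_def vmax_vc vclose_def)
  then have c01: "C 0 \<noteq> C 1" by blast
  have xC: "x \<in> C x" "x \<notin> C 0" "x \<notin> C 1" using x h
    by (simp_all add: C_def vmax_vc) (metis minus_diff_eq vc_neg)
  then have "C x \<noteq> C 0" "C x \<noteq> C 1" by blast+
  then have "card {C 0, C 1, C x} = 3" using c01 by simp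
  moreover have "{C 0, C 1, C x} \<subseteq> residue_classes v" unfolding RC using x by auto
  ultimately have "3 \<le> card (residue_classes v)" using fin by (metis card_mono)
  then show False using card p2 by simp
qed

lemma half:
  assumes "p = 2" "vc (k + 1) x" shows "vc k (x / 2)"
  using vc_div[OF assms(2), of 2] two v2_two[OF assms(1)] by simp

lemma unit_facts:
  assumes p2: "p = 2" and u: "u \<in> Ov" "\<not> vc 1 u"
  shows "vc 1 (u - 1)" "vc 1 (u + 1)" "vc 3 (u^2 - 1)" "vc 2 (u - 1) \<or> vc 2 (u + 1)"
proof -
  have v21: "vc 1 (2::'a)" using v2_two[OF p2] two by (simp add: vclose_def)
  show u1: "vc 1 (u - 1)" using res2[OF p2 u(1)] u(2) by simp
  have "u + 1 = (u - 1) + 2" by simp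
  then show "vc 1 (u + 1)" using vc_add[OF u1 v21] by metis
  define m where "m = (u - 1) / 2"
  have mO: "m \<in> Ov" unfolding m_def using half[OF p2, of 0] u1 by (simp add: vring_vc)
  have um: "u = 2 * m + 1" using two by (simp add: m_def field_simps)
  have mm: "vc 1 m \<or> vc 1 (m + 1)"
  proof (cases "vc 1 m")
    case False
    then have "vc 1 (m - 1)" using res2[OF p2 mO] by simp
    then have "vc 1 ((m - 1) + 2)" using vc_add v21 by blast
    then show ?thesis by (simp add: add.commute add_diff_eq)
  qed simp
  have "vc 1 (m * (m + 1))"
  proof -
    have m1: "vc 0 (m + 1)" using mO O_add[OF mO O_1] by (simp add: vring_vc)
    have m0: "vc 0 m" using mO by (simp add: vring_vc)
    show ?thesis using mm vc_mult[of 1 m 0 "m+1"] vc_mult[of 0 m 1 "m+1"] m0 m1 by auto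
  qed
  moreover have "vc 2 (4::'a)" using vc_mult[OF v21 v21] by simp
  ultimately have "vc (2 + 1) (4 * (m * (m + 1)))" using vc_mult[of 2 4 1] by blast
  moreover have "u^2 - 1 = 4 * (m * (m + 1))" by (simp add: um power2_eq_square algebra_simps)
  ultimately show "vc 3 (u^2 - 1)" by simp
  have e: "u - 1 = 2 * m" "u + 1 = 2 * (m + 1)" by (simp_all add: um)
  have "vc 2 (2 * m) \<or> vc 2 (2 * (m + 1))"
    using mm vc_mult[OF v21, of 1 m] vc_mult[OF v21, of 1 "m+1"] by auto
  then show "vc 2 (u - 1) \<or> vc 2 (u + 1)" unfolding e .
qed

end


context lfield begin

lemma caseU1:
  assumes s: "s \<noteq> 0" and dd: "d = d0 * s^2" and vd0: "v d0 = 0" and q: "(d0 - 1) / 4 \<in> Ov"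
    and f: "disc_isometry d v LL f"
  shows "\<exists>g\<in>SOlat d LL. \<forall>x\<in>DD. g x - f x \<in> LL"
proof -
  have d00: "d0 \<noteq> 0" using d0 dd by auto
  have l1: "(1, 0) \<in> LL" unfolding OK_char by (simp add: knorm_def)
  define w where "w = (1/2 :: 'a, 1 / (2 * s))"
  have "knorm d w = - ((d0 - 1) / 4)"
    using s two four by (simp add: w_def knorm_def dd field_simps power2_eq_square)
  then have wL: "w \<in> LL" unfolding OK_char using q two by (simp add: w_def)
  have sub: "x \<in> LL" if x: "x \<in> DD" for x
  proof -
    have A: "2 * fst x \<in> Ov" using x l1 unfolding dual_lattice_def by (force simp: kbil_eq)
    have r: "kbil d x w \<in> Ov" using x wL unfolding dual_lattice_def by blast
    have rr: "kbil d x w = fst x - d0 * s * snd x"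
      using s two by (simp add: kbil_eq w_def dd field_simps power2_eq_square)
    define r where "r = fst x - d0 * s * snd x"
    have rO: "r \<in> Ov" using r rr by (simp add: r_def)
    have "knorm d x = ((d0 - 1) / 4 * (2 * fst x)^2 + (2 * fst x) * r - r^2) / d0"
      using d00 s two four by (simp add: knorm_def r_def dd field_simps power2_eq_square)
    moreover have "(d0 - 1) / 4 * (2 * fst x)^2 + (2 * fst x) * r - r^2 \<in> Ov"
    proof -
      have "\<And>A r. A \<in> Ov \<Longrightarrow> r \<in> Ov \<Longrightarrow> (d0 - 1) / 4 * A^2 + A * r - r^2 \<in> Ov"
        using q by (intro O_add O_diff O_mult O_pow)
      then show ?thesis using A rO by blast
    qed
    ultimately have "knorm d x \<in> Ov" using O_div_unit d00 vd0 by simp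
    then show ?thesis using A unfolding OK_char by simp
  qed
  have "\<forall>x\<in>DD. id x - f x \<in> LL"
  proof
    fix x assume x: "x \<in> DD"
    have "f x \<in> DD" using f_DD[OF f x] .
    then show "id x - f x \<in> LL" using sub x LL_diff by simp
  qed
  then show ?thesis using id_SOlat by blast
qed

end


context dval begin
lemma v_sum_ne: "x \<noteq> 0 \<Longrightarrow> y \<noteq> 0 \<Longrightarrow> v x \<noteq> v y \<Longrightarrow> x + y \<noteq> 0 \<and> v (x + y) = min (v x) (v y)"
  using strict_ultra[of x y] strict_ultra[of y x] by (cases "v x < v y") (auto simp: add.commute)
end

context dval begin
lemma vc_from_div: "x / y \<in> Ov \<Longrightarrow> y \<noteq> 0 \<Longrightarrow> vc k y \<Longrightarrow> vc k x"
proof -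
  assume a: "x / y \<in> Ov" and y: "y \<noteq> 0" and k: "vc k y"
  have "vc (0 + k) (x / y * y)" using vc_mult[of 0 "x/y" k y] a k by (simp add: vring_vc)
  then show "vc k x" using y by simp
qed
end

context lfield begin

lemma klinear_id: "klinear id" by (simp add: klinear_def)
lemma klinear_neg: "klinear uminus" by (simp add: klinear_def ksc_def)

lemma parity_O:
  assumes d00: "d0 \<noteq> 0" and vd0: "v d0 = 1" and N: "a^2 - d0 * b^2 \<in> Ov"
  shows "a \<in> Ov \<and> b \<in> Ov"
proof -
  have aO: "a \<in> Ov"
  proof (rule ccontr)
    assume na: "a \<notin> Ov"
    then have a0: "a \<noteq> 0" and va: "v a < 0" by (auto simp: vring_def)
    show False
    proof (cases "b = 0")
      case True
      then have "a^2 \<in> Ov" using N by simp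
      then show False using a0 va by (simp add: vring_def vsq)
    next
      case False
      have ne: "v (a^2) \<noteq> v (- (d0 * b^2))" using a0 False d00 vd0 by (simp add: vsq vmult) presburger
      from v_sum_ne[OF _ _ ne] a0 False d00
      have "v (a^2 - d0 * b^2) = min (v (a^2)) (v (- (d0 * b^2)))" "a^2 - d0 * b^2 \<noteq> 0" by auto
      then show False using N va a0 by (simp add: vring_def vsq)
    qed
  qed
  moreover have "b \<in> Ov"
  proof (cases "b = 0")
    case False
    have "d0 * b^2 = a^2 - (a^2 - d0 * b^2)" by simp
    then have "d0 * b^2 \<in> Ov" using aO N O_diff O_pow by metis
    then show ?thesis using False d00 vd0 by (simp add: vring_def vmult vsq)
  qed simp
  ultimately show ?thesis by simp
qed

end

context qp begin

lemma caseR: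
  assumes s: "s \<noteq> 0" and dd: "d = d0 * s^2" and vd0: "v d0 = 1"
    and f: "disc_isometry d v LL f"
  shows "\<exists>g\<in>SOlat d LL. \<forall>x\<in>DD. g x - f x \<in> LL"
proof -
  have d00: "d0 \<noteq> 0" using d0 dd by auto
  have kn: "knorm d z = (fst z)^2 - d0 * (snd z * s)^2" for z
    by (simp add: knorm_def dd power2_eq_square algebra_simps)
  have LLR: "z \<in> LL \<longleftrightarrow> fst z \<in> Ov \<and> snd z * s \<in> Ov" for z
  proof
    assume "z \<in> LL"
    then show "fst z \<in> Ov \<and> snd z * s \<in> Ov" using parity_O[OF d00 vd0] kn OK_char by metis
  next
    assume h: "fst z \<in> Ov \<and> snd z * s \<in> Ov"
    have d0O: "d0 \<in> Ov" using vd0 by (simp add: vring_def)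
    then show "z \<in> LL" using h unfolding OK_char kn by (auto intro!: O_mult O_diff O_pow)
  qed
  define e1 where "e1 = (1/2 :: 'a, 0 :: 'a)"
  define e2 where "e2 = (0 :: 'a, 1 / (2 * d0 * s))"
  have l1: "(1, 0) \<in> LL" and l2: "(0, 1/s) \<in> LL" using s by (simp_all add: LLR)
  have coords: "2 * fst x \<in> Ov \<and> 2 * d0 * s * snd x \<in> Ov" if x: "x \<in> DD" for x
  proof -
    have "kbil d x (1, 0) \<in> Ov" "kbil d x (0, 1/s) \<in> Ov" using x l1 l2 unfolding dual_lattice_def by blast+
    moreover have "kbil d x (1,0) = 2 * fst x" by (simp add: kbil_eq)
    moreover have "kbil d x (0, 1/s) = - (2 * d0 * s * snd x)"
      using s by (simp add: kbil_eq dd power2_eq_square field_simps)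
    ultimately show ?thesis by simp
  qed
  have e1D: "e1 \<in> DD" unfolding dual_lattice_def
  proof (intro CollectI ballI)
    fix l assume "l \<in> LL"
    then show "kbil d e1 l \<in> Ov" using LLR by (simp add: kbil_eq e1_def)
  qed
  have e2D: "e2 \<in> DD" unfolding dual_lattice_def
  proof (intro CollectI ballI)
    fix l assume "l \<in> LL"
    moreover have "kbil d e2 l = - (snd l * s)" using s d00 two
      by (simp add: kbil_eq e2_def dd power2_eq_square field_simps)
    ultimately show "kbil d e2 l \<in> Ov" using LLR by simp
  qed
  have span: "\<exists>A B. A \<in> Ov \<and> B \<in> Ov \<and> x = ksc A e1 + ksc B e2" if x: "x \<in> DD" for x
  proof (intro exI conjI)
    show "2 * fst x \<in> Ov" "2 * d0 * s * snd x \<in> Ov" using coords[OF x] by auto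
    show "x = ksc (2 * fst x) e1 + ksc (2 * d0 * s * snd x) e2"
      using s d00 two by (simp add: e1_def e2_def ksc_def prod_eq_iff)
  qed
  have knA: "knorm d u = (2 * fst u)^2 / 4 - (2 * d0 * s * snd u)^2 / (4 * d0)" for u
    using s d00 two four by (simp add: knorm_def dd power2_eq_square field_simps)
  have kbA: "kbil d w u = (2 * fst w) * (2 * fst u) / 2 - (2 * d0 * s * snd w) * (2 * d0 * s * snd u) / (2 * d0)" for w u
    using s d00 two four by (simp add: kbil_eq dd power2_eq_square field_simps)
  have ne1: "knorm d e1 = 1/4" and ne2: "knorm d e2 = - 1 / (4 * d0)"
    using s d00 two four by (simp_all add: knorm_def e1_def e2_def dd power2_eq_square field_simps)
  have b12: "kbil d e1 e2 = 0" by (simp add: kbil_eq e1_def e2_def)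
  have v4: "v (4::'a) = 2 * v 2" using vmult[of 2 2] two by simp
  have v4d: "v (4 * d0) = 2 * v 2 + 1" using vmult[of 4 d0] four d00 vd0 v4 by simp
  have v2d: "v (2 * d0) = v 2 + 1" using vmult[of 2 d0] two d00 vd0 by simp
  define A2 where "A2 = 2 * fst (f e2)"
  define B2 where "B2 = 2 * d0 * s * snd (f e2)"
  define A1 where "A1 = 2 * fst (f e1)"
  define B1 where "B1 = 2 * d0 * s * snd (f e1)"
  have fD: "f e1 \<in> DD" "f e2 \<in> DD" using f_DD[OF f] e1D e2D by auto
  have AB: "A1 \<in> Ov" "B1 \<in> Ov" "A2 \<in> Ov" "B2 \<in> Ov"
    using coords[OF fD(1)] coords[OF fD(2)] by (simp_all add: A1_def B1_def A2_def B2_def)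
  have N2: "A2^2 / 4 - B2^2 / (4 * d0) + 1 / (4 * d0) \<in> Ov"
    using f_norm[OF f e2D] unfolding knA[of "f e2"] ne2 by (simp add: A2_def B2_def diff_divide_distrib)
  have N1: "A1^2 / 4 - B1^2 / (4 * d0) - 1/4 \<in> Ov"
    using f_norm[OF f e1D] unfolding knA[of "f e1"] ne1 by (simp add: A1_def B1_def)
  have Bil: "A1 * A2 / 2 - B1 * B2 / (2 * d0) \<in> Ov"
    using f_bil[OF f e1D e2D] unfolding kbA[of "f e1" "f e2"] b12 by (simp add: A1_def B1_def A2_def B2_def)
  have q1: "fst (f e1 - e1) = (A1 - 1) / 2" "snd (f e1 - e1) * s = B1 / (2 * d0)"
    "fst (f e1 - - e1) = (A1 + 1) / 2" "snd (f e1 - - e1) * s = B1 / (2 * d0)"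
    using s d00 two by (simp_all add: e1_def A1_def B1_def field_simps)
  have q2: "fst (f e2 - e2) = A2 / 2" "snd (f e2 - e2) * s = (B2 - 1) / (2 * d0)"
    "fst (f e2 - - e2) = A2 / 2" "snd (f e2 - - e2) * s = (B2 + 1) / (2 * d0)"
    using s d00 two by (simp_all add: e2_def A2_def B2_def field_simps)
  have m1: "f e1 - e1 \<in> LL \<longleftrightarrow> (A1 - 1) / 2 \<in> Ov \<and> B1 / (2 * d0) \<in> Ov"
    by (simp only: LLR q1)
  have m2: "f e2 - e2 \<in> LL \<longleftrightarrow> A2 / 2 \<in> Ov \<and> (B2 - 1) / (2 * d0) \<in> Ov"
    by (simp only: LLR q2)
  have p1: "f e1 - (- e1) \<in> LL \<longleftrightarrow> (A1 + 1) / 2 \<in> Ov \<and> B1 / (2 * d0) \<in> Ov"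
    by (simp only: LLR q1)
  have p2: "f e2 - (- e2) \<in> LL \<longleftrightarrow> A2 / 2 \<in> Ov \<and> (B2 + 1) / (2 * d0) \<in> Ov"
    by (simp only: LLR q2)
  have d0O: "d0 \<in> Ov" "vc 1 d0" using vd0 d00 by (simp_all add: vring_def vclose_def)
  have main: "(f e1 - id e1 \<in> LL \<and> f e2 - id e2 \<in> LL) \<or> (f e1 - uminus e1 \<in> LL \<and> f e2 - uminus e2 \<in> LL)"
  proof (cases "p = 2")
    case False
    have v20: "v 2 = 0" using v2_odd[OF False] .
    have v40: "v (4::'a) = 0" using v4 v20 by simp
    have "fst e1 \<in> Ov" using O_div_unit[OF O_1 two v20] by (simp add: e1_def)
    then have e1L: "e1 \<in> LL" by (simp add: LLR e1_def)
    then have fe1: "f e1 \<in> LL" using f_LL[OF f] by blast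
    have s1: "f e1 - e1 \<in> LL" "f e1 - (- e1) \<in> LL" using LL_diff[OF fe1 e1L] LL_diff[OF fe1 LL_neg[OF e1L]] by auto
    have a2: "A2^2 / 4 \<in> Ov" using O_div_unit[OF O_pow[OF AB(3)] four v40] .
    have eqY: "(1 - B2^2) / (4 * d0) = (A2^2 / 4 - B2^2 / (4 * d0) + 1 / (4 * d0)) - A2^2 / 4"
      by (simp add: diff_divide_distrib)
    have Y: "(1 - B2^2) / (4 * d0) \<in> Ov" unfolding eqY by (rule O_diff[OF N2 a2])
    have "vc 1 (4 * d0)" using v4d v20 four d00 by (simp add: vclose_def)
    then have "vc 1 (1 - B2^2)" using vc_from_div[OF Y] four d00 by simp
    then have "vc 1 ((1 - B2) * (1 + B2))" by (simp add: power2_eq_square algebra_simps)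
    then have or1: "vc 1 (1 - B2) \<or> vc 1 (1 + B2)" using vc_mult_cases[OF O_diff[OF O_1 AB(4)] O_add[OF O_1 AB(4)]] by blast
    have a22: "A2 / 2 \<in> Ov" using O_div_unit[OF AB(3) two v20] .
    from or1 show ?thesis
    proof
      assume "vc 1 (1 - B2)"
      then have "vc 1 (B2 - 1)" by (metis minus_diff_eq vc_neg)
      then have "(B2 - 1) / (2 * d0) \<in> Ov" using O_div_vc[OF _ _, of 1 "B2 - 1" "2 * d0"] two d00 v2d v20 by simp
      then show ?thesis using m2 a22 s1 by simp
    next
      assume "vc 1 (1 + B2)"
      then have "vc 1 (B2 + 1)" by (simp add: add.commute)
      then have "(B2 + 1) / (2 * d0) \<in> Ov" using O_div_vc[OF _ _, of 1 "B2 + 1" "2 * d0"] two d00 v2d v20 by simp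
      then show ?thesis using p2 a22 s1 by simp
    qed
  next
    case True
    have v21: "v 2 = 1" using v2_two[OF True] .
    define X where "X = d0 * A2^2 + 1 - B2^2"
    have "X / (4 * d0) = A2^2 / 4 - B2^2 / (4 * d0) + 1 / (4 * d0)"
      using four d00 by (simp add: X_def field_simps)
    then have "X / (4 * d0) \<in> Ov" using N2 by simp
    moreover have "vc 3 (4 * d0)" using v4d v21 four d00 by (simp add: vclose_def)
    ultimately have X3: "vc 3 X" using vc_from_div four d00 by simp
    have B2u: "\<not> vc 1 B2"
    proof
      assume b: "vc 1 B2"
      have "vc 0 (A2^2)" using O_pow[OF AB(3)] by (simp add: vring_vc)
      then have "vc (1 + 0) (d0 * A2^2)" using vc_mult d0O(2) by blast
      moreover have "vc 1 (B2^2)" using vc_mult[OF b b] by (simp add: power2_eq_square vc_mono)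
      ultimately have "vc 1 (d0 * A2^2 - B2^2)" using vc_diff by simp
      moreover have "vc 1 X" using vc_mono[OF X3] by simp
      ultimately have "vc 1 (X - (d0 * A2^2 - B2^2))" using vc_diff by blast
      then show False by (simp add: X_def vclose_def)
    qed
    note uf = unit_facts[OF True AB(4) B2u]
    have "d0 * A2^2 = X + (B2^2 - 1)" by (simp add: X_def)
    then have "vc 3 (d0 * A2^2)" using vc_add[OF X3 uf(3)] by simp
    then have A21: "vc 1 A2"
      using d00 vd0 by (cases "A2 = 0") (auto simp: vclose_def vmult vsq)
    have a22: "A2 / 2 \<in> Ov" using half[OF True, of 0 A2] A21 by (simp add: vring_vc)
    have v2d2: "v (2 * d0) = 2" using v2d v21 by simp
    have B2v: "B2 \<noteq> 0" "v B2 = 0" using B2u AB(4) by (auto simp: vclose_def vring_def)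
    have "vc 0 A1" using AB(1) by (simp add: vring_vc)
    then have "vc (1 + 0) (A2 * A1)" using vc_mult[OF A21] by blast
    then have "A1 * A2 / 2 \<in> Ov" using half[OF True, of 0] by (simp add: vring_vc mult.commute)
    then have "A1 * A2 / 2 - (A1 * A2 / 2 - B1 * B2 / (2 * d0)) \<in> Ov" using Bil O_diff by blast
    then have "B1 * B2 / (2 * d0) \<in> Ov" by simp
    moreover have "vc 2 (2 * d0)" using v2d2 two d00 by (simp add: vclose_def)
    ultimately have "vc 2 (B1 * B2)" using vc_from_div two d00 by simp
    then have B12: "vc 2 B1" using vc_unit_mult B2v by blast
    have b1: "B1 / (2 * d0) \<in> Ov" using O_div_vc[OF B12] two d00 v2d2 by simp
    have "vc (2 + 2) (B1 * B1)" using vc_mult[OF B12 B12] .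
    then have "B1^2 / (4 * d0) \<in> Ov" using O_div_vc[of 4 "B1^2" "4 * d0"] four d00 v4d v21
      by (simp add: power2_eq_square)
    then have "(A1^2 / 4 - B1^2 / (4 * d0) - 1/4) + B1^2 / (4 * d0) \<in> Ov" using N1 O_add by blast
    then have Z: "(A1^2 - 1) / 4 \<in> Ov" by (simp add: diff_divide_distrib)
    have "vc 2 (4::'a)" using v4 v21 four by (simp add: vclose_def)
    then have A1sq: "vc 2 (A1^2 - 1)" using vc_from_div[OF Z] four by simp
    have A1u: "\<not> vc 1 A1"
    proof
      assume a: "vc 1 A1"
      have "vc 1 (A1^2)" using vc_mult[OF a a] by (simp add: power2_eq_square vc_mono)
      moreover have "vc 1 (A1^2 - 1)" using vc_mono[OF A1sq] by simp
      ultimately have "vc 1 ((A1^2 - 1) - A1^2)" using vc_diff by blast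
      then show False by (simp add: vclose_def)
    qed
    note ufa = unit_facts[OF True AB(1) A1u]
    have a1m: "(A1 - 1) / 2 \<in> Ov" "(A1 + 1) / 2 \<in> Ov"
      using half[OF True, of 0] ufa(1,2) by (simp_all add: vring_vc)
    from uf(4) show ?thesis
    proof
      assume "vc 2 (B2 - 1)"
      then have "(B2 - 1) / (2 * d0) \<in> Ov" using O_div_vc[OF _ _, of 2 "B2 - 1" "2 * d0"] two d00 v2d2 by simp
      then show ?thesis using m1 m2 a22 a1m b1 by simp
    next
      assume "vc 2 (B2 + 1)"
      then have "(B2 + 1) / (2 * d0) \<in> Ov" using O_div_vc[OF _ _, of 2 "B2 + 1" "2 * d0"] two d00 v2d2 by simp
      then show ?thesis using p1 p2 a22 a1m b1 by simp
    qed
  qed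
  then show ?thesis
  proof
    assume h: "f e1 - id e1 \<in> LL \<and> f e2 - id e2 \<in> LL"
    show ?thesis using basis_lemma[OF f e1D e2D span klinear_id] h id_SOlat by blast
  next
    assume h: "f e1 - uminus e1 \<in> LL \<and> f e2 - uminus e2 \<in> LL"
    show ?thesis using basis_lemma[OF f e1D e2D span klinear_neg] h neg_SOlat by blast
  qed
qed

end


context qp begin

lemma caseU3:
  assumes s: "s \<noteq> 0" and dd: "d = d0 * s^2" and vd0: "v d0 = 0" and nq: "(d0 - 1) / 4 \<notin> Ov"
    and p2: "p = 2" and f: "disc_isometry d v LL f"
  shows "\<exists>g\<in>SOlat d LL. \<forall>x\<in>DD. g x - f x \<in> LL"
proof -
  have d00: "d0 \<noteq> 0" using d0 dd by auto
  have v21: "v 2 = 1" using v2_two[OF p2] .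
  have v4: "v (4::'a) = 2" using vmult[of 2 2] two v21 by simp
  have vc24: "vc 2 (4::'a)" using v4 by (simp add: vclose_def)
  have vc12: "vc 1 (2::'a)" using v21 by (simp add: vclose_def)
  have d0O: "d0 \<in> Ov" "\<not> vc 1 d0" using vd0 d00 by (simp_all add: vring_def vclose_def)
  note ufd = unit_facts[OF p2 d0O]
  have n2: "\<not> vc 2 (d0 - 1)"
  proof
    assume "vc 2 (d0 - 1)"
    then have "(d0 - 1) / 4 \<in> Ov" using O_div_vc[of 2 "d0 - 1" 4] four v4 by simp
    then show False using nq by simp
  qed
  have dp1: "vc 2 (d0 + 1)" using ufd(4) n2 by simp
  have dm0: "d0 - 1 \<noteq> 0" using n2 by auto
  have vdm: "v (1 - d0) = 1"
  proof -
    have "v (d0 - 1) = 1" using ufd(1) n2 dm0 by (simp add: vclose_def)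
    then show ?thesis by (metis minus_diff_eq vneg)
  qed
  have dm0': "1 - d0 \<noteq> 0" using dm0 by simp
  have kn: "knorm d z = (fst z)^2 - d0 * (snd z * s)^2" for z
    by (simp add: knorm_def dd power2_eq_square algebra_simps)
  have LLU: "z \<in> LL \<longleftrightarrow> fst z \<in> Ov \<and> snd z * s \<in> Ov" for z
  proof
    assume z: "z \<in> LL"
    define a where "a = fst z"
    define b where "b = snd z * s"
    have A: "2 * a \<in> Ov" and N: "a^2 - d0 * b^2 \<in> Ov" using z unfolding OK_char kn a_def b_def by auto
    have aO: "a \<in> Ov"
    proof (rule ccontr)
      assume na: "a \<notin> Ov"
      define AA where "AA = 2 * a"
      define BB where "BB = 2 * b"
      have AAu: "\<not> vc 1 AA"
      proof
        assume "vc 1 AA"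
        then have "vc 0 (AA / 2)" using half[OF p2, of 0] by simp
        then show False using na two by (simp add: AA_def vring_vc)
      qed
      have AAO: "AA \<in> Ov" using A by (simp add: AA_def)
      have AA0: "AA \<noteq> 0" "v AA = 0" using AAu AAO by (auto simp: vclose_def vring_def)
      have X: "AA^2 - d0 * BB^2 = 4 * (a^2 - d0 * b^2)" by (simp add: AA_def BB_def power2_eq_square algebra_simps)
      have XO: "AA^2 - d0 * BB^2 \<in> Ov" unfolding X by (rule O_mult[OF O_numeral N])
      have "vc 0 (a^2 - d0 * b^2)" using N by (simp add: vring_vc)
      then have "vc (2 + 0) (4 * (a^2 - d0 * b^2))" by (rule vc_mult[OF vc24])
      then have X2: "vc 2 (AA^2 - d0 * BB^2)" unfolding X by (simp only: add_0_right)
      have BBO: "BB \<in> Ov"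
      proof (rule ccontr)
        assume nb: "BB \<notin> Ov"
        then have B0: "BB \<noteq> 0" and vB: "v BB < 0" by (auto simp: vring_def)
        have ne: "v (AA^2) \<noteq> v (- (d0 * BB^2))" using AA0 B0 d00 vd0 vB by (simp add: vsq vmult)
        from v_sum_ne[OF _ _ ne] AA0 B0 d00
        have "v (AA^2 - d0 * BB^2) = min (v (AA^2)) (v (- (d0 * BB^2)))" "AA^2 - d0 * BB^2 \<noteq> 0" by auto
        then show False using XO vB B0 d00 vd0 by (simp add: vring_def vsq vmult)
      qed
      have BBu: "\<not> vc 1 BB"
      proof
        assume b1: "vc 1 BB"
        have "vc 0 d0" using d0O by (simp add: vring_vc)
        moreover have "vc 2 (BB * BB)" using vc_mult[OF b1 b1] by simp
        ultimately have "vc (0 + 2) (d0 * (BB * BB))" by (rule vc_mult)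
        then have "vc 2 (d0 * BB^2)" by (simp add: power2_eq_square)
        from vc_add[OF X2 this] have "vc 2 ((AA^2 - d0 * BB^2) + d0 * BB^2)" .
        then have "vc 2 (AA^2)" by simp
        then show False using AA0 by (simp add: vclose_def vsq)
      qed
      have u1: "vc 3 (AA^2 - 1)" using unit_facts(3)[OF p2 AAO AAu] .
      have u2: "vc 3 (BB^2 - 1)" using unit_facts(3)[OF p2 BBO BBu] .
      have "vc 0 d0" using d0O by (simp add: vring_vc)
      then have u2': "vc (0 + 3) (d0 * (BB^2 - 1))" using u2 vc_mult by blast
      have "d0 - 1 = (AA^2 - 1) - d0 * (BB^2 - 1) - (AA^2 - d0 * BB^2)" by (simp add: algebra_simps)
      moreover have "vc 2 ((AA^2 - 1) - d0 * (BB^2 - 1) - (AA^2 - d0 * BB^2))"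
        using vc_diff[OF vc_diff[OF vc_mono[OF u1] vc_mono[OF u2']] X2] by simp
      ultimately show False using n2 by simp
    qed
    moreover have "b \<in> Ov"
    proof (cases "b = 0")
      case False
      have "d0 * b^2 = a^2 - (a^2 - d0 * b^2)" by simp
      then have "d0 * b^2 \<in> Ov" using aO N O_diff O_pow by metis
      then show ?thesis using False d00 vd0 by (simp add: vring_def vmult vsq)
    qed simp
    ultimately show "fst z \<in> Ov \<and> snd z * s \<in> Ov" by (simp add: a_def b_def)
  next
    assume h: "fst z \<in> Ov \<and> snd z * s \<in> Ov"
    then show "z \<in> LL" using d0O unfolding OK_char kn by (auto intro!: O_mult O_diff O_pow)
  qed
  define e1 where "e1 = (1/2 :: 'a, 0 :: 'a)"
  define e2 where "e2 = (0 :: 'a, 1 / (2 * s))"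
  have l1: "(1, 0) \<in> LL" and l2: "(0, 1/s) \<in> LL" using s by (simp_all add: LLU)
  have coords: "2 * fst x \<in> Ov \<and> 2 * s * snd x \<in> Ov" if x: "x \<in> DD" for x
  proof -
    have "kbil d x (1, 0) \<in> Ov" "kbil d x (0, 1/s) \<in> Ov" using x l1 l2 unfolding dual_lattice_def by blast+
    moreover have "kbil d x (1,0) = 2 * fst x" by (simp add: kbil_eq)
    moreover have "kbil d x (0, 1/s) = - (d0 * (2 * s * snd x))"
      using s by (simp add: kbil_eq dd power2_eq_square field_simps)
    ultimately have "2 * fst x \<in> Ov" "d0 * (2 * s * snd x) \<in> Ov" by (simp_all only: O_neg)
    then show ?thesis using O_div_unit[of "d0 * (2 * s * snd x)" d0] d00 vd0 by simp
  qed
  have e1D: "e1 \<in> DD" unfolding dual_lattice_def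
  proof (intro CollectI ballI)
    fix l assume "l \<in> LL"
    then show "kbil d e1 l \<in> Ov" using LLU by (simp add: kbil_eq e1_def)
  qed
  have e2D: "e2 \<in> DD" unfolding dual_lattice_def
  proof (intro CollectI ballI)
    fix l assume "l \<in> LL"
    moreover have "kbil d e2 l = - (d0 * (snd l * s))" using s d00 two
      by (simp add: kbil_eq e2_def dd power2_eq_square field_simps)
    ultimately show "kbil d e2 l \<in> Ov" using LLU d0O O_mult by simp
  qed
  have span: "\<exists>A B. A \<in> Ov \<and> B \<in> Ov \<and> x = ksc A e1 + ksc B e2" if x: "x \<in> DD" for x
  proof (intro exI conjI)
    show "2 * fst x \<in> Ov" "2 * s * snd x \<in> Ov" using coords[OF x] by auto
    show "x = ksc (2 * fst x) e1 + ksc (2 * s * snd x) e2"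
      using s two by (simp add: e1_def e2_def ksc_def prod_eq_iff)
  qed
  have knA: "knorm d u = ((2 * fst u)^2 - d0 * (2 * s * snd u)^2) / 4" for u
    using s two four by (simp add: knorm_def dd power2_eq_square field_simps)
  have ne1: "knorm d e1 = 1/4" and ne2: "knorm d e2 = - d0 / 4"
    using s two four by (simp_all add: knorm_def e1_def e2_def dd power2_eq_square field_simps)
  have cl: "u - e1 \<in> LL \<or> u - e2 \<in> LL"
    if u: "u \<in> DD" and c: "vc 2 ((2 * fst u)^2 - d0 * (2 * s * snd u)^2 - 1)" for u
  proof -
    define A where "A = 2 * fst u"
    define B where "B = 2 * s * snd u"
    have AO: "A \<in> Ov" and BO: "B \<in> Ov" using coords[OF u] by (simp_all add: A_def B_def)
    have c': "vc 2 (A^2 - d0 * B^2 - 1)" using c by (simp add: A_def B_def)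
    have q: "fst (u - e1) = (A - 1) / 2" "snd (u - e1) * s = B / 2"
      "fst (u - e2) = A / 2" "snd (u - e2) * s = (B - 1) / 2"
      using s two by (simp_all add: e1_def e2_def A_def B_def field_simps)
    have h0: "vc 0 (x / 2)" if "vc 1 x" for x using half[OF p2, of 0 x] that by simp
    show ?thesis
    proof (cases "vc 1 A")
      case A1: True
      show ?thesis
      proof (cases "vc 1 B")
        case True
        have "vc 1 (A^2)" using vc_mult[OF A1 A1] vc_mono by (simp add: power2_eq_square)
        moreover have "vc 1 (d0 * B^2)"
        proof -
          have "vc 2 (B * B)" using vc_mult[OF True True] by simp
          moreover have "vc 0 d0" using d0O by (simp add: vring_vc)
          ultimately have "vc (0 + 2) (d0 * (B * B))" using vc_mult by blast
          then show ?thesis using vc_mono by (simp add: power2_eq_square)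
        qed
        ultimately have "vc 1 (A^2 - d0 * B^2)" using vc_diff by blast
        moreover have "vc 1 (A^2 - d0 * B^2 - 1)" using vc_mono[OF c'] by simp
        ultimately have "vc 1 ((A^2 - d0 * B^2) - (A^2 - d0 * B^2 - 1))" using vc_diff by blast
        then show ?thesis by (simp add: vclose_def)
      next
        case False
        have "vc 1 (B - 1)" using unit_facts(1)[OF p2 BO False] .
        then have "u - e2 \<in> LL" unfolding LLU q using h0 A1 by (simp add: vring_vc)
        then show ?thesis by simp
      qed
    next
      case A1: False
      show ?thesis
      proof (cases "vc 1 B")
        case True
        have "vc 1 (A - 1)" using unit_facts(1)[OF p2 AO A1] .
        then have "u - e1 \<in> LL" unfolding LLU q using h0 True by (simp add: vring_vc)
        then show ?thesis by simp
      next
        case False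
        have u1: "vc 3 (A^2 - 1)" using unit_facts(3)[OF p2 AO A1] .
        have u2: "vc 3 (B^2 - 1)" using unit_facts(3)[OF p2 BO False] .
        have "vc 0 d0" using d0O by (simp add: vring_vc)
        then have u2': "vc (0 + 3) (d0 * (B^2 - 1))" using u2 vc_mult by blast
        have "vc 1 ((A^2 - 1) - d0 * (B^2 - 1) - (A^2 - d0 * B^2 - 1))"
          using vc_diff[OF vc_diff[OF vc_mono[OF u1] vc_mono[OF u2']] vc_mono[OF c']] by simp
        moreover have "(A^2 - 1) - d0 * (B^2 - 1) - (A^2 - d0 * B^2 - 1) = d0" by (simp add: algebra_simps)
        ultimately show ?thesis using d0O by simp
      qed
    qed
  qed
  have fD: "f e1 \<in> DD" "f e2 \<in> DD" using f_DD[OF f] e1D e2D by auto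
  have c1: "vc 2 ((2 * fst (f e1))^2 - d0 * (2 * s * snd (f e1))^2 - 1)"
  proof -
    have eq: "((2 * fst (f e1))^2 - d0 * (2 * s * snd (f e1))^2 - 1) / 4 = knorm d (f e1) - knorm d e1"
      using four by (simp add: knA[of "f e1"] ne1 diff_divide_distrib)
    have "((2 * fst (f e1))^2 - d0 * (2 * s * snd (f e1))^2 - 1) / 4 \<in> Ov"
      unfolding eq by (rule f_norm[OF f e1D])
    then show ?thesis using vc_from_div four vc24 by blast
  qed
  have c2: "vc 2 ((2 * fst (f e2))^2 - d0 * (2 * s * snd (f e2))^2 - 1)"
  proof -
    have eq: "(((2 * fst (f e2))^2 - d0 * (2 * s * snd (f e2))^2 - 1) + (d0 + 1)) / 4 = knorm d (f e2) - knorm d e2"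
      using four by (simp add: knA[of "f e2"] ne2 field_simps)
    have "(((2 * fst (f e2))^2 - d0 * (2 * s * snd (f e2))^2 - 1) + (d0 + 1)) / 4 \<in> Ov"
      unfolding eq by (rule f_norm[OF f e2D])
    then have "vc 2 (((2 * fst (f e2))^2 - d0 * (2 * s * snd (f e2))^2 - 1) + (d0 + 1))"
      using vc_from_div four vc24 by blast
    from vc_diff[OF this dp1] show ?thesis by (simp only: add_diff_cancel)
  qed
  have r1: "f e1 - e1 \<in> LL \<or> f e1 - e2 \<in> LL" using cl[OF fD(1) c1] .
  have r2: "f e2 - e1 \<in> LL \<or> f e2 - e2 \<in> LL" using cl[OF fD(2) c2] .
  have e12: "e1 - e2 \<notin> LL"
  proof
    assume "e1 - e2 \<in> LL"
    then have "(1/2::'a) \<in> Ov" using LLU by (simp add: e1_def e2_def)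
    then show False using vdiv[of 1 2] two v21 by (simp add: vring_def)
  qed
  have same: "False" if "f e1 - e \<in> LL" "f e2 - e \<in> LL" for e
  proof -
    have "(f e1 - e) - (f e2 - e) \<in> LL" using LL_diff that by blast
    then have "f e1 - f e2 \<in> LL" by simp
    then show False using f_inj[OF f e1D e2D] e12 by blast
  qed
  have cases: "(f e1 - e1 \<in> LL \<and> f e2 - e2 \<in> LL) \<or> (f e1 - e2 \<in> LL \<and> f e2 - e1 \<in> LL)"
    using r1 r2 same by blast
  then show ?thesis
  proof
    assume h: "f e1 - e1 \<in> LL \<and> f e2 - e2 \<in> LL"
    have "\<forall>x\<in>DD. id x - f x \<in> LL" using basis_lemma[OF f e1D e2D span klinear_id] h by simp
    then show ?thesis using id_SOlat by blast
  next
    assume h: "f e1 - e2 \<in> LL \<and> f e2 - e1 \<in> LL"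
    define a0 where "a0 = (1 + d0) / (1 - d0)"
    define b0 where "b0 = 2 / (1 - d0)"
    define al where "al = (a0, b0 / s)"
    have a0O: "a0 \<in> Ov" unfolding a0_def using O_div_vc[of 2 "1 + d0" "1 - d0"] dp1 dm0' vdm
      by (simp add: add.commute)
    have b0O: "b0 \<in> Ov" unfolding b0_def using O_div_vc[of 1 2 "1 - d0"] vc12 dm0' vdm by simp
    have n1: "knorm d al = a0^2 - d0 * b0^2"
      using s by (simp add: knorm_def al_def dd power_divide)
    have n2: "a0^2 - d0 * b0^2 = ((1 + d0)^2 - d0 * 2^2) / (1 - d0)^2"
      by (simp add: a0_def b0_def power_divide diff_divide_distrib)
    have n3: "(1 + d0)^2 - d0 * 2^2 = (1 - d0)^2" by (simp add: power2_eq_square algebra_simps)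
    have nal: "knorm d al = 1" using n1 n2 n3 dm0' by simp
    have mul1: "fst (kmul d al x) = a0 * fst x + d0 * b0 * (snd x * s)" "snd (kmul d al x) * s = a0 * (snd x * s) + b0 * fst x" for x
      using s by (simp_all add: kmul_def al_def dd power2_eq_square field_simps)
    have mul2: "fst (kmul d (kconj al) x) = a0 * fst x - d0 * b0 * (snd x * s)" "snd (kmul d (kconj al) x) * s = a0 * (snd x * s) - b0 * fst x" for x
      using s by (simp_all add: kmul_def kconj_def al_def dd power2_eq_square field_simps)
    have img: "kmul d al ` LL = LL"
    proof (rule mult_image[OF nal])
      fix x assume "x \<in> LL"
      then have x: "fst x \<in> Ov" "snd x * s \<in> Ov" using LLU by auto
      show "kmul d al x \<in> LL" unfolding LLU mul1 using x a0O b0O d0O by (auto intro!: O_add O_mult)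
      show "kmul d (kconj al) x \<in> LL" unfolding LLU mul2 using x a0O b0O d0O by (auto intro!: O_diff O_mult)
    qed
    have gS: "kmul d al \<in> SOlat d LL" using mult_SOV[OF nal] img by (simp add: SOlat_def)
    have glin: "klinear (kmul d al)" using mult_SOV[OF nal] by (simp add: SOV_def OV_def)
    define w0 where "w0 = (1 + d0) / (2 * (1 - d0))"
    have v2m: "v (2 * (1 - d0)) = 2" using vmult[of 2 "1 - d0"] two dm0' v21 vdm by simp
    have w0O: "w0 \<in> Ov" unfolding w0_def using O_div_vc[of 2 "1 + d0" "2 * (1 - d0)"] dp1 dm0' two v2m
      by (simp add: add.commute)
    have "vc 2 (3 * (d0 + 1) - 4)" using vc_diff[OF _ vc24, of "3 * (d0 + 1)"] vc_mult[of 0 3 2 "d0 + 1"] dp1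
      by (simp add: vring_vc[symmetric])
    then have "vc 2 (3 * d0 - 1)" by (simp add: algebra_simps)
    then have w1O: "(3 * d0 - 1) / (2 * (1 - d0)) \<in> Ov" using O_div_vc[of 2 "3 * d0 - 1" "2 * (1 - d0)"] dm0' two v2m by simp
    have g1: "kmul d al e1 - e2 \<in> LL"
    proof -
      have "fst (kmul d al e1 - e2) = w0" "snd (kmul d al e1 - e2) * s = w0"
        using s two dm0' by (simp_all add: kmul_def al_def e1_def e2_def a0_def b0_def w0_def field_simps)
      then show ?thesis using LLU w0O by simp
    qed
    have g2: "kmul d al e2 - e1 \<in> LL"
    proof -
      have "fst (kmul d al e2 - e1) = (3 * d0 - 1) / (2 * (1 - d0))" "snd (kmul d al e2 - e1) * s = w0"
        using s two dm0' by (simp_all add: kmul_def al_def e1_def e2_def a0_def b0_def w0_def dd power2_eq_square field_simps)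
      then show ?thesis using LLU w0O w1O by simp
    qed
    have "f e1 - kmul d al e1 \<in> LL" using LL_diff[of "f e1 - e2" "kmul d al e1 - e2"] h g1 by simp
    moreover have "f e2 - kmul d al e2 \<in> LL" using LL_diff[of "f e2 - e1" "kmul d al e2 - e1"] h g2 by simp
    ultimately show ?thesis using basis_lemma[OF f e1D e2D span glin] gS by blast
  qed
qed

end


lemma sn_mono: "G \<subseteq> H \<Longrightarrow> spinor_norms d G \<subseteq> spinor_norms d H"
  unfolding spinor_norms_def by blast

lemma SOlat_sub: "SOlat d L \<subseteq> Olat d L"
  unfolding SOlat_def Olat_def SOV_def by blast

context qp begin

lemma partb:
  assumes f: "disc_isometry d v LL f"
  shows "\<exists>g\<in>SOlat d LL. \<forall>x\<in>DD. g x - f x \<in> LL"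
proof -
  obtain s where s: "s \<noteq> 0" "v s = v d div 2" using vsurj by blast
  define d0 where "d0 = d / s^2"
  have dd: "d = d0 * s^2" using s by (simp add: d0_def)
  have d00: "d0 \<noteq> 0" using d0 s by (simp add: d0_def)
  have vd0: "v d0 = v d mod 2" using s d0 by (simp add: d0_def vdiv vsq) (simp add: minus_div_mult_eq_mod[symmetric] mult.commute)
  have "v d0 = 0 \<or> v d0 = 1" using vd0 by auto
  then show ?thesis
  proof
    assume v1: "v d0 = 1"
    show ?thesis using caseR[OF s(1) dd v1 f] .
  next
    assume v0: "v d0 = 0"
    show ?thesis
    proof (cases "(d0 - 1) / 4 \<in> Ov")
      case True
      show ?thesis using caseU1[OF s(1) dd v0 True f] .
    next
      case False
      show ?thesis
      proof (cases "p = 2")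
        case True
        show ?thesis using caseU3[OF s(1) dd v0 False True f] .
      next
        case p2: False
        have v4: "v (4::'a) = 0" using vmult[of 2 2] two v2_odd[OF p2] by simp
        have "d0 \<in> Ov" using v0 d00 by (simp add: vring_def)
        then have "d0 - 1 \<in> Ov" using O_diff O_1 by blast
        then have "(d0 - 1) / 4 \<in> Ov" using O_div_unit four v4 by blast
        then show ?thesis using False by blast
      qed
    qed
  qed
qed

end

lemma parta:
  assumes "lfield v d"
  shows "spinor_norms d (Olat d (OK d v)) = spinor_norms d (SOlat d (OK d v)) \<and>
    ((\<nexists>t. d = t ^ 2) \<longrightarrow>
       spinor_norms d (Olat d (OK d v)) = {knorm d z | z. knorm d z \<noteq> 0}) \<and>
    ((\<exists>t. d = t ^ 2) \<longrightarrow>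
       spinor_norms d (Olat d (OK d v)) = {u * t ^ 2 | u t. u \<in> vunits v \<and> t \<noteq> 0})"
proof -
  interpret lfield v d by (rule assms)
  have SO: "spinor_norms d (SOlat d (OK d v)) \<subseteq> spinor_norms d (Olat d (OK d v))"
    by (rule sn_mono[OF SOlat_sub])
  show ?thesis
  proof (cases "\<exists>t. d = t^2")
    case True
    then obtain t where t: "d = t^2" by blast
    have "spinor_norms d (Olat d (OK d v)) = {u * t ^ 2 | u t. u \<in> vunits v \<and> t \<noteq> 0}"
      "spinor_norms d (Olat d (OK d v)) = spinor_norms d (SOlat d (OK d v))"
      using split_sn_sub[OF t] split_sn_super[OF t] SO by blast+
    then show ?thesis using True by blast
  next
    case False
    have "spinor_norms d (Olat d (OK d v)) = {knorm d z | z. knorm d z \<noteq> 0}"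
      "spinor_norms d (Olat d (OK d v)) = spinor_norms d (SOlat d (OK d v))"
      using sn_field_sub[OF False] field_sn_super[OF False] SO by blast+
    then show ?thesis using False by blast
  qed
qed

theorem lemma2p3:
  fixes v :: "'a::field \<Rightarrow> int" and d :: 'a
  assumes F: "nonarch_local_field v"
    and char: "(2::'a) \<noteq> 0"
    and d: "d \<noteq> 0"
  shows "spinor_norms d (Olat d (OK d v)) = spinor_norms d (SOlat d (OK d v)) \<and>
    ((\<nexists>t. d = t ^ 2) \<longrightarrow>
       spinor_norms d (Olat d (OK d v)) = {knorm d z | z. knorm d z \<noteq> 0}) \<and>
    ((\<exists>t. d = t ^ 2) \<longrightarrow>
       spinor_norms d (Olat d (OK d v)) = {u * t ^ 2 | u t. u \<in> vunits v \<and> t \<noteq> 0}) \<and>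
    (\<forall>p::nat. prime p \<and> (\<forall>n::nat. n > 0 \<longrightarrow> (of_nat n :: 'a) \<noteq> 0) \<and>
        v (of_nat p) = 1 \<and> card (residue_classes v) = p \<longrightarrow>
      (\<forall>f. disc_isometry d v (OK d v) f \<longrightarrow>
         (\<exists>g\<in>SOlat d (OK d v). \<forall>x\<in>dual_lattice d v (OK d v). g x - f x \<in> OK d v)))"
proof -
  have LF: "lfield v d"
    using F char d unfolding nonarch_local_field_def lfield_def lfield_axioms_def dval_def by blast
  have B: "\<forall>p::nat. prime p \<and> (\<forall>n::nat. n > 0 \<longrightarrow> (of_nat n :: 'a) \<noteq> 0) \<and>
        v (of_nat p) = 1 \<and> card (residue_classes v) = p \<longrightarrow>
      (\<forall>f. disc_isometry d v (OK d v) f \<longrightarrow>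
         (\<exists>g\<in>SOlat d (OK d v). \<forall>x\<in>dual_lattice d v (OK d v). g x - f x \<in> OK d v))"
  proof (intro allI impI)
    fix p :: nat and f
    assume hp: "prime p \<and> (\<forall>n::nat. n > 0 \<longrightarrow> (of_nat n :: 'a) \<noteq> 0) \<and>
        v (of_nat p) = 1 \<and> card (residue_classes v) = p"
      and f: "disc_isometry d v (OK d v) f"
    interpret qp v d p
      using LF hp unfolding qp_def qp_axioms_def by blast
    show "\<exists>g\<in>SOlat d (OK d v). \<forall>x\<in>dual_lattice d v (OK d v). g x - f x \<in> OK d v"
      using partb[OF f] .
  qed
  show ?thesis using parta[OF LF] B by blast
qed



end
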